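(* Let $(u,\Psi)\in C^2(B_r)\times C^2(\Gamma(\Sigma B_r))$ be a solution of \begin{equation*} \left\{ \begin{array}{rcl} -\Delta u(x) &=& 2V^2(x)|x|^{2\alpha}e^{2u(x)}-V(x)|x|^{\alpha}e^{u(x)}|\Psi|^2 \\ \not{D}\Psi &=& -V(x)|x|^{\alpha}e^{u(x)}\Psi \end{array} \text { in } B_{r}(0), \right. \end{equation*} with $\int_{B_r(0)}|x|^{2\alpha}e^{2u}+|\Psi|^4dx<+\infty$. Then, for any $0<R<r$, the Pohozaev type identity \begin{eqnarray*} &&R\int_{\partial B_R(0)} |\frac {\partial u}{\partial \nu}|^2-\frac 12|\nabla u|^2d\sigma \\ &=&(1+\alpha)\int_{B_R(0)}(2V^2(x)|x|^{2\alpha}e^{2u}-V(x)|x|^{\alpha}e^u|\Psi|^2)dx \\ & & -R\int_{\partial B_R(0)}V^2(x)|x|^{2\alpha}e^{2u}d\sigma+\frac 12\int_{\partial B_R(0)}(\langle\frac {\partial \Psi}{\partial \nu}, x\cdot\Psi\rangle +\langle x\cdot\Psi, \frac {\partial \Psi}{\partial \nu}\rangle ) d\sigma \\ & & +\int_{B_R(0)}(|x|^{2\alpha}e^{2u}x\cdot\nabla (V^2(x))-|x|^{\alpha}e^u|\Psi|^2x\cdot \nabla V(x))dx \end{eqnarray*} holds, where $\nu$ is the outward normal vector of $\partial B_R(0)$.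
   Context: $\alpha\ge 0$, $V$ is a $C^{1,\beta}$ function with $0<a\le V\le b$, $B_r=B_r(0)\subset\mathbb{R}^2$. Spinors are maps to $\mathbb{C}^2$ and $\not{D}$ is the standard Dirac operator on $\mathbb{R}^2$: for $\Psi=(f,g)^T$, $\not{D}\Psi = 2(\partial_{\bar z} g, -\partial_z f)^T$. For $x=x_1e_1+x_2e_2$, $x\cdot\Psi$ denotes Clifford multiplication, where $e_1,e_2$ act on spinors by the matrices $e_1=\begin{pmatrix}0&1\\-1&0\end{pmatrix}$, $e_2=\begin{pmatrix}0&i\\i&0\end{pmatrix}$. *)

theory Defs
  imports "HOL-Analysis.Analysis"
begin

text \<open>Points of R^2 are modelled as complex numbers x = x1 + i x2 (x1 = Re x, x2 = Im x).
Spinors are elements of C^2, modelled as complex \<times> complex (norm = sqrt(|f|^2+|g|^2)).\<close>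

definition d1 :: "(complex \<Rightarrow> 'b::real_normed_vector) \<Rightarrow> complex \<Rightarrow> 'b" where
  "d1 f x = frechet_derivative f (at x) 1"

definition d2 :: "(complex \<Rightarrow> 'b::real_normed_vector) \<Rightarrow> complex \<Rightarrow> 'b" where
  "d2 f x = frechet_derivative f (at x) \<i>"

definition C1_on :: "complex set \<Rightarrow> (complex \<Rightarrow> 'b::real_normed_vector) \<Rightarrow> bool" where
  "C1_on S f \<longleftrightarrow> open S \<and> f differentiable_on S \<and>
     continuous_on S (d1 f) \<and> continuous_on S (d2 f)"

definition C2_on :: "complex set \<Rightarrow> (complex \<Rightarrow> 'b::real_normed_vector) \<Rightarrow> bool" where
  "C2_on S f \<longleftrightarrow> C1_on S f \<and> C1_on S (d1 f) \<and> C1_on S (d2 f)"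

definition C1_holder_on :: "real \<Rightarrow> complex set \<Rightarrow> (complex \<Rightarrow> real) \<Rightarrow> bool" where
  "C1_holder_on \<beta> S f \<longleftrightarrow> C1_on S f \<and>
     (\<exists>C. \<forall>x\<in>S. \<forall>y\<in>S. \<bar>d1 f x - d1 f y\<bar> \<le> C * dist x y powr \<beta> \<and>
                         \<bar>d2 f x - d2 f y\<bar> \<le> C * dist x y powr \<beta>)"

definition grad :: "(complex \<Rightarrow> real) \<Rightarrow> complex \<Rightarrow> complex" where
  "grad f x = Complex (d1 f x) (d2 f x)"

definition laplacian :: "(complex \<Rightarrow> real) \<Rightarrow> complex \<Rightarrow> real" where
  "laplacian f x = d1 (d1 f) x + d2 (d2 f) x"

definition dz :: "(complex \<Rightarrow> complex) \<Rightarrow> complex \<Rightarrow> complex" where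
  "dz f x = (d1 f x - \<i> * d2 f x) / 2"

definition dzbar :: "(complex \<Rightarrow> complex) \<Rightarrow> complex \<Rightarrow> complex" where
  "dzbar f x = (d1 f x + \<i> * d2 f x) / 2"

definition dirac :: "(complex \<Rightarrow> complex \<times> complex) \<Rightarrow> complex \<Rightarrow> complex \<times> complex" where
  "dirac \<Psi> x = (2 * dzbar (\<lambda>y. snd (\<Psi> y)) x, - 2 * dz (\<lambda>y. fst (\<Psi> y)) x)"

text \<open>Clifford multiplication x\<cdot>\<psi> = x1 e1 \<psi> + x2 e2 \<psi>, with
 e1 = [[0,1],[-1,0]], e2 = [[0,i],[i,0]].\<close>
definition clifford :: "complex \<Rightarrow> complex \<times> complex \<Rightarrow> complex \<times> complex" where
  "clifford x \<psi> = (let (f, g) = \<psi> in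
      (of_real (Re x) * g + of_real (Im x) * (\<i> * g),
       of_real (Re x) * (- f) + of_real (Im x) * (\<i> * f)))"

definition herm :: "complex \<times> complex \<Rightarrow> complex \<times> complex \<Rightarrow> complex" where
  "herm \<phi> \<psi> = fst \<phi> * cnj (fst \<psi>) + snd \<phi> * cnj (snd \<psi>)"

definition normal_deriv :: "(complex \<Rightarrow> 'b::real_normed_vector) \<Rightarrow> complex \<Rightarrow> 'b" where
  "normal_deriv f x = frechet_derivative f (at x) (sgn x)"

text \<open>t^a for t \<ge> 0 with the convention t^0 = 1 (also at t = 0).\<close>
definition rpow :: "real \<Rightarrow> real \<Rightarrow> real" where
  "rpow t a = (if a = 0 then 1 else t powr a)"

text \<open>Integral over the circle of radius R with respect to arc length d\<sigma>.\<close>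
definition circle_integral :: "real \<Rightarrow> (complex \<Rightarrow> 'b::euclidean_space) \<Rightarrow> 'b" where
  "circle_integral R F = integral {0..2*pi} (\<lambda>t. R *\<^sub>R F (of_real R * cis t))"

end

theory Submission
  imports Defs
begin

lemma has_integral_transport_box:
  fixes g :: "'a::euclidean_space \<Rightarrow> 'b::euclidean_space" and h :: "'b \<Rightarrow> 'a"
    and f :: "'b \<Rightarrow> 'c::banach"
  assumes hg: "\<And>x. h (g x) = x" and gh: "\<And>y. g (h y) = y"
    and lg: "linear g"
    and gbox: "\<And>u v. \<exists>w z. g ` cbox u v = cbox w z"
    and hbox: "\<And>u v. \<exists>w z. h ` cbox u v = cbox w z"
    and cont: "\<And>u v. Henstock_Kurzweil_Integration.content (g ` cbox u v) = Henstock_Kurzweil_Integration.content (cbox u v)"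
    and fi: "(f has_integral i) (cbox a b)"
  shows "((\<lambda>x. f (g x)) has_integral i) (h ` cbox a b)"
proof -
  have "\<And>x. isCont g x" using lg by (simp add: linear_continuous_at linear_conv_bounded_linear)
  from has_integral_twiddle[of 1 h g, OF _ hg gh this gbox hbox _ fi] cont
  show ?thesis by simp
qed

lemma has_integral_transport:
  fixes g :: "'a::euclidean_space \<Rightarrow> 'b::euclidean_space" and h :: "'b \<Rightarrow> 'a"
    and f :: "'b \<Rightarrow> 'c::banach"
  assumes hg: "\<And>x. h (g x) = x" and gh: "\<And>y. g (h y) = y"
    and lg: "linear g"
    and gbox: "\<And>u v. \<exists>w z. g ` cbox u v = cbox w z"
    and hbox: "\<And>u v. \<exists>w z. h ` cbox u v = cbox w z"
    and cont: "\<And>u v. Henstock_Kurzweil_Integration.content (g ` cbox u v) = Henstock_Kurzweil_Integration.content (cbox u v)"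
    and sub: "S \<subseteq> cbox a b"
    and fi: "(f has_integral i) S"
  shows "((\<lambda>x. f (g x)) has_integral i) (h ` S)"
proof -
  have "((\<lambda>x. if x \<in> S then f x else 0) has_integral i) (cbox a b)"
    using sub fi by simp
  from has_integral_transport_box[OF hg gh lg gbox hbox cont this]
  have 1: "((\<lambda>x. if g x \<in> S then f (g x) else 0) has_integral i) (h ` cbox a b)" .
  have eq: "(\<lambda>x. if g x \<in> S then f (g x) else 0) = (\<lambda>x. if x \<in> h ` S then f (g x) else 0)"
    using hg gh by (auto simp: image_iff) (metis)+
  have "h ` S \<subseteq> h ` cbox a b" using sub by auto
  then show ?thesis using 1 unfolding eq by simp
qed

lemma mem_cbox2: "(x::real^2) \<in> cbox u v \<longleftrightarrow> u$1 \<le> x$1 \<and> x$1 \<le> v$1 \<and> u$2 \<le> x$2 \<and> x$2 \<le> v$2"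
  by (auto simp: mem_box_cart forall_2)

definition v2 :: "real \<times> real \<Rightarrow> real^2" where "v2 p = vector [fst p, snd p]"
definition p2 :: "real^2 \<Rightarrow> real \<times> real" where "p2 v = (v$1, v$2)"

lemma v2_p2[simp]: "v2 (p2 v) = v" by (simp add: v2_def p2_def vec_eq_iff forall_2)
lemma p2_v2[simp]: "p2 (v2 p) = p" by (simp add: v2_def p2_def)
lemma v2_nth[simp]: "v2 p $ 1 = fst p" "v2 p $ 2 = snd p" by (simp_all add: v2_def)

lemma linear_v2: "linear v2"
  by (rule linearI) (simp_all add: v2_def vec_eq_iff forall_2)

lemma mem_cboxP: "(x::real\<times>real) \<in> cbox (a,c) (b,d) \<longleftrightarrow> a \<le> fst x \<and> fst x \<le> b \<and> c \<le> snd x \<and> snd x \<le> d"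
  by (cases x) (simp add: cbox_Pair_eq[symmetric] mem_Times_iff)

lemma v2_image_cbox: "v2 ` cbox u v = cbox (v2 u) (v2 v)"
proof -
  obtain a c b d where uv: "u = (a,c)" "v = (b,d)" by (cases u; cases v) auto
  have "cbox (v2 u) (v2 v) \<subseteq> v2 ` cbox u v"
  proof
    fix x assume "x \<in> cbox (v2 u) (v2 v)"
    then have "p2 x \<in> cbox u v" by (auto simp: uv mem_cbox2 p2_def mem_cboxP)
    then show "x \<in> v2 ` cbox u v" by (metis image_eqI v2_p2)
  qed
  moreover have "v2 ` cbox u v \<subseteq> cbox (v2 u) (v2 v)"
    by (auto simp: uv mem_cbox2 mem_cboxP)
  ultimately show ?thesis by blast
qed

lemma p2_image_cbox: "p2 ` cbox u v = cbox (p2 u) (p2 v)"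
proof -
  have "p2 ` cbox u v = p2 ` v2 ` cbox (p2 u) (p2 v)" by (simp add: v2_image_cbox)
  also have "\<dots> = cbox (p2 u) (p2 v)" by (simp add: image_image)
  finally show ?thesis .
qed

lemma content_v2: "Henstock_Kurzweil_Integration.content (v2 ` cbox u v) = Henstock_Kurzweil_Integration.content (cbox u v)"
proof (cases u; cases v)
  fix a c b d assume uv: "u = (a,c)" "v = (b,d)"
  have e: "cbox (v2 (a,c)) (v2 (b,d)) = {} \<longleftrightarrow> \<not> (a \<le> b \<and> c \<le> d)"
  proof
    assume "cbox (v2 (a,c)) (v2 (b,d)) = {}"
    then have "v2 (a,c) \<notin> cbox (v2 (a,c)) (v2 (b,d))" by simp
    then show "\<not> (a \<le> b \<and> c \<le> d)" by (auto simp: mem_cbox2)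
  next
    assume "\<not> (a \<le> b \<and> c \<le> d)"
    then show "cbox (v2 (a,c)) (v2 (b,d)) = {}" by (auto simp: mem_cbox2)
  qed
  show ?thesis
    unfolding v2_image_cbox uv content_Pair content_cbox_if_cart e
    by (auto simp: UNIV_2)
qed

lemma integral_cart2_prod:
  fixes F :: "real^2 \<Rightarrow> real"
  assumes "continuous_on (cbox (v2 (a,c)) (v2 (b,d))) F"
  shows "integral (cbox (v2 (a,c)) (v2 (b,d))) F = integral {a..b} (\<lambda>x. integral {c..d} (\<lambda>y. F (v2 (x,y))))"
proof -
  have I: "(F has_integral integral (cbox (v2 (a,c)) (v2 (b,d))) F) (cbox (v2 (a,c)) (v2 (b,d)))"
    using integrable_continuous[OF assms] by (simp add: integrable_integral)
  have b1: "\<exists>w z. v2 ` cbox u v = cbox w z" for u v by (auto simp: v2_image_cbox)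
  have b2: "\<exists>w z. p2 ` cbox u v = cbox w z" for u v by (simp only: p2_image_cbox) blast
  from has_integral_transport_box[of p2 v2, OF p2_v2 v2_p2 linear_v2 b1 b2 content_v2 I]
  have "((\<lambda>x. F (v2 x)) has_integral integral (cbox (v2 (a,c)) (v2 (b,d))) F) (cbox (a,c) (b,d))"
    by (auto simp: v2_image_cbox p2_image_cbox)
  then have "integral (cbox (v2 (a,c)) (v2 (b,d))) F = integral (cbox (a,c) (b,d)) (\<lambda>x. F (v2 x))"
    by (simp add: integral_unique)
  also have "\<dots> = integral (cbox a b) (\<lambda>x. integral (cbox c d) (\<lambda>y. F (v2 (x,y))))"
  proof (rule integral_prod_continuous)
    show "continuous_on (cbox (a, c) (b, d)) (\<lambda>x. F (v2 x))"
      by (rule continuous_on_compose2[OF assms]) (auto simp: v2_image_cbox intro: linear_continuous_on linear_v2 linear_conv_bounded_linear[THEN iffD1])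
  qed
  finally show ?thesis by simp
qed

definition toC :: "real^2 \<Rightarrow> complex" where "toC v = Complex (v$1) (v$2)"
definition ofC :: "complex \<Rightarrow> real^2" where "ofC z = v2 (Re z, Im z)"

lemma toC_ofC[simp]: "toC (ofC z) = z" by (simp add: toC_def ofC_def complex_eq_iff)
lemma ofC_toC[simp]: "ofC (toC v) = v" by (simp add: toC_def ofC_def vec_eq_iff forall_2)
lemma linear_ofC: "linear ofC"
  by (rule linearI) (simp_all add: ofC_def v2_def vec_eq_iff forall_2)
lemma linear_toC: "linear toC"
  by (rule linearI) (simp_all add: toC_def complex_eq_iff)

lemma mem_cboxC: "(x::complex) \<in> cbox a b \<longleftrightarrow> Re a \<le> Re x \<and> Re x \<le> Re b \<and> Im a \<le> Im x \<and> Im x \<le> Im b"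
  by (auto simp: mem_box Basis_complex_def)

lemma ofC_image_cbox: "ofC ` cbox u v = cbox (ofC u) (ofC v)"
proof -
  have "cbox (ofC u) (ofC v) \<subseteq> ofC ` cbox u v"
  proof
    fix x assume "x \<in> cbox (ofC u) (ofC v)"
    then have "toC x \<in> cbox u v" by (auto simp: mem_cboxC mem_cbox2 toC_def ofC_def)
    then show "x \<in> ofC ` cbox u v" by (metis image_eqI ofC_toC)
  qed
  moreover have "ofC ` cbox u v \<subseteq> cbox (ofC u) (ofC v)"
    by (auto simp: mem_cboxC mem_cbox2 ofC_def)
  ultimately show ?thesis by blast
qed

lemma toC_image_cbox: "toC ` cbox u v = cbox (toC u) (toC v)"
proof -
  have "toC ` cbox u v = toC ` ofC ` cbox (toC u) (toC v)" by (simp add: ofC_image_cbox)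
  also have "\<dots> = cbox (toC u) (toC v)" by (simp add: image_image)
  finally show ?thesis .
qed

lemma content_ofC: "Henstock_Kurzweil_Integration.content (ofC ` cbox u v) = Henstock_Kurzweil_Integration.content (cbox u v)"
proof -
  have e1: "cbox (ofC u) (ofC v) = {} \<longleftrightarrow> \<not> (Re u \<le> Re v \<and> Im u \<le> Im v)"
  proof
    assume "cbox (ofC u) (ofC v) = {}"
    then have "ofC u \<notin> cbox (ofC u) (ofC v)" by simp
    then show "\<not> (Re u \<le> Re v \<and> Im u \<le> Im v)" by (auto simp: mem_cbox2 ofC_def)
  qed (auto simp: mem_cbox2 ofC_def)
  have e2: "cbox u v = {} \<longleftrightarrow> \<not> (Re u \<le> Re v \<and> Im u \<le> Im v)"
  proof
    assume "cbox u v = {}"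
    then have "u \<notin> cbox u v" by simp
    then show "\<not> (Re u \<le> Re v \<and> Im u \<le> Im v)" by (auto simp: mem_cboxC)
  qed (auto simp: mem_cboxC)
  show ?thesis
    unfolding ofC_image_cbox content_cbox_if_cart content_cbox_if e1 e2
    by (auto simp: UNIV_2 Basis_complex_def ofC_def)
qed

lemma norm_ofC[simp]: "norm (ofC z) = norm z"
  by (simp add: ofC_def norm_vec_def L2_set_def UNIV_2 cmod_def)
lemma norm_toC[simp]: "norm (toC v) = norm v"
  by (metis norm_ofC ofC_toC)

lemma has_integral_toC:
  fixes F :: "real^2 \<Rightarrow> 'c::banach"
  assumes "(F has_integral i) (ball 0 R)"
  shows "((\<lambda>z. F (ofC z)) has_integral i) (ball 0 R)"
proof -
  have b1: "\<exists>w z. ofC ` cbox u v = cbox w z" for u v by (simp only: ofC_image_cbox) blast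
  have b2: "\<exists>w z. toC ` cbox u v = cbox w z" for u v by (simp only: toC_image_cbox) blast
  have sub: "ball (0::real^2) R \<subseteq> cbox (-(v2 (R,R))) (v2 (R,R))"
  proof
    fix x :: "real^2" assume "x \<in> ball 0 R"
    then have "norm x < R" by simp
    moreover have "\<bar>x$1\<bar> \<le> norm x" "\<bar>x$2\<bar> \<le> norm x" by (simp_all add: component_le_norm_cart)
    ultimately show "x \<in> cbox (-(v2 (R,R))) (v2 (R,R))" by (auto simp: mem_cbox2)
  qed
  have "toC ` ball 0 R = ball 0 R"
  proof
    show "toC ` ball 0 R \<subseteq> ball 0 R" by auto
    show "ball 0 R \<subseteq> toC ` ball 0 R"
    proof
      fix z :: complex assume "z \<in> ball 0 R"
      then have "ofC z \<in> ball 0 R" by simp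
      then show "z \<in> toC ` ball 0 R" by (metis image_eqI toC_ofC)
    qed
  qed
  with has_integral_transport[of toC ofC, OF toC_ofC ofC_toC linear_ofC b1 b2 content_ofC sub assms]
  show ?thesis by simp
qed

definition pol :: "real^2 \<Rightarrow> real^2" where "pol v = v2 (v$1 * cos (v$2), v$1 * sin (v$2))"
definition pol' :: "real^2 \<Rightarrow> real^2 \<Rightarrow> real^2" where
  "pol' v w = v2 (w$1 * cos (v$2) - v$1 * sin (v$2) * w$2, w$1 * sin (v$2) + v$1 * cos (v$2) * w$2)"

lemma toC_pol: "toC (pol v) = of_real (v$1) * cis (v$2)"
  by (simp add: toC_def pol_def complex_eq_iff)

lemma bl_v2: "bounded_linear v2" using linear_v2 linear_conv_bounded_linear by auto

lemma pol_deriv: "(pol has_derivative pol' v) (at v within S)"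
proof -
  have "((\<lambda>v. (v$1 * cos (v$2), v$1 * sin (v$2))) has_derivative
     (\<lambda>w. (w$1 * cos (v$2) - v$1 * sin (v$2) * w$2, w$1 * sin (v$2) + v$1 * cos (v$2) * w$2))) (at v within S)"
    by (auto intro!: derivative_eq_intros bounded_linear.has_derivative[OF bounded_linear_vec_nth]
      simp: algebra_simps)
  from bounded_linear.has_derivative[OF bl_v2 this]
  show ?thesis unfolding pol_def pol'_def by simp
qed

lemma det_pol': "det (matrix (pol' v)) = v$1"
proof -
  have "det (matrix (pol' v)) = v$1 * (cos (v$2))^2 + v$1 * (sin (v$2))^2"
    by (simp add: det_2 matrix_def pol'_def axis_def power2_eq_square algebra_simps)
  also have "\<dots> = v$1" by (simp add: distrib_left[symmetric])
  finally show ?thesis .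
qed

definition Sp :: "real \<Rightarrow> (real^2) set" where "Sp R = box (v2 (0,0)) (v2 (R, 2*pi))"

lemma mem_Sp: "v \<in> Sp R \<longleftrightarrow> 0 < v$1 \<and> v$1 < R \<and> 0 < v$2 \<and> v$2 < 2*pi"
  by (auto simp: Sp_def mem_box_cart forall_2)

lemma inj_pol: "inj_on pol (Sp R)"
proof
  fix v w assume v: "v \<in> Sp R" and w: "w \<in> Sp R" and e: "pol v = pol w"
  then have e2: "of_real (v$1) * cis (v$2) = of_real (w$1) * cis (w$2)"
    by (metis toC_pol)
  then have "norm (of_real (v$1) * cis (v$2)) = norm (of_real (w$1) * cis (w$2) :: complex)" by simp
  then have r: "v$1 = w$1" using v w by (simp add: mem_Sp norm_mult)
  with e2 v have "cis (v$2) = cis (w$2)" by (simp add: mem_Sp)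
  then have "sin (v$2) = sin (w$2) \<and> cos (v$2) = cos (w$2)" by (metis cis.sel)
  then obtain k :: int where k: "v$2 = w$2 + 2 * pi * k" using sin_cos_eq_iff by blast
  have "\<bar>2 * pi * real_of_int k\<bar> < 2 * pi" using k v w by (auto simp: mem_Sp)
  then have "\<bar>real_of_int k\<bar> < 1" by (simp add: abs_mult)
  then have "k = 0" by linarith
  with k r show "v = w" by (simp add: vec_eq_iff forall_2)
qed

lemma pol_image_sub: "pol ` Sp R \<subseteq> ball 0 R"
proof
  fix x assume "x \<in> pol ` Sp R"
  then obtain v where v: "v \<in> Sp R" "x = pol v" by blast
  have "norm x = norm (toC (pol v))" by (simp add: v)
  also have "\<dots> = v$1" using v by (simp add: toC_pol norm_mult mem_Sp)
  finally show "x \<in> ball 0 R" using v by (simp add: mem_Sp)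
qed

lemma pol_image_sup: "ball 0 R - pol ` Sp R \<subseteq> {x. x \<bullet> axis 2 1 = 0}"
proof
  fix x :: "real^2" assume x: "x \<in> ball 0 R - pol ` Sp R"
  show "x \<in> {x. x \<bullet> axis 2 1 = 0}"
  proof (rule ccontr)
    assume "x \<notin> {x. x \<bullet> axis 2 1 = 0}"
    then have x2: "x$2 \<noteq> 0" by (simp add: inner_axis)
    define z where "z = toC x"
    have "Im z \<noteq> 0" using x2 by (simp add: z_def toC_def)
    then have zR: "z \<notin> \<real>" using complex_is_Real_iff by blast
    then have z0: "z \<noteq> 0" by auto
    have A0: "Arg z \<noteq> 0" using zR Arg_eq_0 by blast
    have Ab: "- pi < Arg z" "Arg z \<le> pi" using Arg_bounded by auto
    define th where "th = (if Arg z > 0 then Arg z else Arg z + 2*pi)"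
    have th: "0 < th" "th < 2*pi" using A0 Ab pi_gt_zero by (auto simp: th_def)
    have cth: "cis th = cis (Arg z)"
    proof (cases "Arg z > 0")
      case False
      then have "th = Arg z + 2*pi" by (simp add: th_def)
      then show ?thesis by (simp add: cis_def complex_eq_iff)
    qed (simp add: th_def)
    have "norm z < R" using x by (simp add: z_def)
    then have "v2 (norm z, th) \<in> Sp R" using th z0 by (simp add: mem_Sp)
    moreover have "toC (pol (v2 (norm z, th))) = z"
    proof -
      have "toC (pol (v2 (norm z, th))) = rcis (norm z) (Arg z)"
        by (simp add: toC_pol cth rcis_def)
      then show ?thesis by (simp only: rcis_cmod_Arg)
    qed
    then have "pol (v2 (norm z, th)) = x" by (metis ofC_toC z_def)
    ultimately show False using x by blast
  qed
qed

lemma neg_axis2: "negligible {x::real^2. x \<bullet> axis 2 1 = 0}"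
  by (rule negligible_standard_hyperplane) (simp add: axis_in_Basis_iff)

lemma pol_cbox_sub: "v \<in> cbox (v2 (0,0)) (v2 (R, 2*pi)) \<Longrightarrow> pol v \<in> cball 0 R"
proof -
  assume v: "v \<in> cbox (v2 (0,0)) (v2 (R, 2*pi))"
  have "norm (pol v) = norm (toC (pol v))" by simp
  also have "\<dots> = v$1" using v by (simp add: toC_pol norm_mult mem_cbox2)
  finally show ?thesis using v by (simp add: mem_cbox2)
qed

lemma continuous_on_pol: "continuous_on S pol"
  using pol_deriv has_derivative_continuous_on by blast

lemma polar_cov:
  fixes F :: "real^2 \<Rightarrow> real"
  assumes cF: "continuous_on (cball 0 R) F"
  shows "(F has_integral integral (cbox (v2 (0,0)) (v2 (R, 2*pi))) (\<lambda>v. \<bar>v$1\<bar> * F (pol v))) (ball 0 R)"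
proof -
  let ?B = "cbox (v2 (0,0)) (v2 (R, 2*pi))"
  let ?G = "\<lambda>v. \<bar>v$1\<bar> * F (pol v)"
  define b where "b = integral ?B ?G"
  have cG: "continuous_on ?B ?G"
    by (intro continuous_intros continuous_on_compose2[OF cF continuous_on_pol])
       (auto intro: pol_cbox_sub)
  have aiB: "?G absolutely_integrable_on ?B" by (rule absolutely_integrable_continuous[OF cG])
  have iB: "(?G has_integral b) ?B" unfolding b_def using aiB
    by (simp add: absolutely_integrable_on_def integrable_integral)
  have aiS: "?G absolutely_integrable_on Sp R" using aiB
    unfolding absolutely_integrable_on_def Sp_def integrable_on_def has_integral_open_interval .
  have iS: "integral (Sp R) ?G = b" using iB unfolding Sp_def
    by (simp add: has_integral_open_interval integral_unique)
  have blv: "bounded_linear (vec :: real \<Rightarrow> real^1)"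
    using linear_vec linear_conv_bounded_linear by blast
  let ?F1 = "\<lambda>x. (vec (F x) :: real^1)"
  have eq: "\<And>x. x \<in> Sp R \<Longrightarrow> \<bar>det (matrix (pol' x))\<bar> *\<^sub>R ?F1 (pol x) = ((vec :: real \<Rightarrow> real^1) \<circ> ?G) x"
    by (simp add: det_pol' mem_Sp vec_eq_iff)
  have ai1: "((vec :: real \<Rightarrow> real^1) \<circ> ?G) absolutely_integrable_on Sp R"
    by (rule absolutely_integrable_linear[OF aiS blv])
  have "?G integrable_on Sp R" using aiS by (simp add: absolutely_integrable_on_def)
  from integrable_integral[OF this] have iS': "(?G has_integral b) (Sp R)" by (simp only: iS)
  have "(((vec :: real \<Rightarrow> real^1) \<circ> ?G) has_integral (vec b :: real^1)) (Sp R)"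
    by (rule has_integral_linear[OF iS' blv])
  then have i1: "integral (Sp R) ((vec :: real \<Rightarrow> real^1) \<circ> ?G) = (vec b :: real^1)" by (rule integral_unique)
  have "(\<lambda>x. \<bar>det (matrix (pol' x))\<bar> *\<^sub>R ?F1 (pol x)) absolutely_integrable_on Sp R \<and>
        integral (Sp R) (\<lambda>x. \<bar>det (matrix (pol' x))\<bar> *\<^sub>R ?F1 (pol x)) = (vec b :: real^1)"
  proof -
    have e: "(\<lambda>x. \<bar>det (matrix (pol' x))\<bar> *\<^sub>R ?F1 (pol x)) = ((vec :: real \<Rightarrow> real^1) \<circ> ?G)"
      by (simp add: det_pol' fun_eq_iff vec_eq_iff)
    show ?thesis unfolding e using ai1 i1 by simp
  qed
  then have "?F1 absolutely_integrable_on pol ` Sp R \<and> integral (pol ` Sp R) ?F1 = (vec b :: real^1)"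
    using has_absolute_integral_change_of_variables[of "Sp R" pol pol' ?F1 "vec b"] pol_deriv inj_pol
    by (auto simp: Sp_def)
  then have "(?F1 has_integral (vec b :: real^1)) (pol ` Sp R)"
    by (metis absolutely_integrable_on_def has_integral_integrable_integral)
  from has_integral_linear[OF this bounded_linear_vec_nth[of 1]]
  have "(F has_integral b) (pol ` Sp R)" by (simp add: o_def)
  moreover have "(F has_integral b) (pol ` Sp R) \<longleftrightarrow> (F has_integral b) (ball 0 R)"
  proof (rule has_integral_spike_set_eq)
    have "{x \<in> pol ` Sp R - ball 0 R. F x \<noteq> 0} = {}" using pol_image_sub by blast
    then show "negligible {x \<in> pol ` Sp R - ball 0 R. F x \<noteq> 0}" by (simp only: negligible_empty)
    have "{x \<in> ball 0 R - pol ` Sp R. F x \<noteq> 0} \<subseteq> {x. x \<bullet> axis 2 1 = 0}"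
      using pol_image_sup by blast
    then show "negligible {x \<in> ball 0 R - pol ` Sp R. F x \<noteq> 0}"
      by (rule negligible_subset[OF neg_axis2])
  qed
  ultimately show ?thesis by (simp add: b_def)
qed

lemma continuous_on_toC: "continuous_on S toC"
  using linear_toC linear_continuous_on linear_conv_bounded_linear by blast

lemma polar_integral:
  fixes f :: "complex \<Rightarrow> real"
  assumes cf: "continuous_on (cball 0 R) f"
  shows "(f has_integral integral {0..R} (\<lambda>r. integral {0..2*pi} (\<lambda>t. r * f (of_real r * cis t)))) (ball 0 R)"
proof -
  let ?F = "\<lambda>v. f (toC v)"
  have cF: "continuous_on (cball 0 R) ?F"
    by (rule continuous_on_compose2[OF cf continuous_on_toC]) auto
  let ?I = "integral (cbox (v2 (0,0)) (v2 (R, 2*pi))) (\<lambda>v. \<bar>v$1\<bar> * ?F (pol v))"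
  from has_integral_toC[OF polar_cov[OF cF]]
  have 1: "(f has_integral ?I) (ball 0 R)" by simp
  have cG: "continuous_on (cbox (v2 (0,0)) (v2 (R, 2*pi))) (\<lambda>v. \<bar>v$1\<bar> * ?F (pol v))"
    by (intro continuous_intros continuous_on_compose2[OF cF continuous_on_pol])
       (auto intro: pol_cbox_sub)
  have "?I = integral {0..R} (\<lambda>x. integral {0..2*pi} (\<lambda>y. \<bar>x\<bar> * f (toC (pol (v2 (x,y))))))"
    using integral_cart2_prod[OF cG] by simp
  also have "\<dots> = integral {0..R} (\<lambda>r. integral {0..2*pi} (\<lambda>t. r * f (of_real r * cis t)))"
    by (rule integral_cong) (simp add: toC_pol)
  finally show ?thesis using 1 by simp
qed

lemma dirderiv:
  fixes f :: "complex \<Rightarrow> 'b::real_normed_vector"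
  assumes "f differentiable (at (p + of_real s * v))"
  shows "((\<lambda>s. f (p + of_real s * v)) has_vector_derivative frechet_derivative f (at (p + of_real s * v)) v) (at s within T)"
proof -
  let ?y = "p + of_real s * v"
  have 1: "((\<lambda>s. p + of_real s * v) has_derivative (\<lambda>h. of_real h * v)) (at s within T)"
    by (auto intro!: derivative_eq_intros)
  have 2: "(f has_derivative frechet_derivative f (at ?y)) (at ?y)"
    using assms frechet_derivative_works by blast
  have lin: "linear (frechet_derivative f (at ?y))" using assms by (rule linear_frechet_derivative)
  from has_derivative_compose[OF 1 2]
  have "((\<lambda>s. f (p + of_real s * v)) has_derivative (\<lambda>h. frechet_derivative f (at ?y) (of_real h * v))) (at s within T)" .
  moreover have "(\<lambda>h. frechet_derivative f (at ?y) (of_real h * v)) = (\<lambda>h. h *\<^sub>R frechet_derivative f (at ?y) v)"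
    using linear_cmul[OF lin] by (simp add: scaleR_conv_of_real[symmetric])
  ultimately show ?thesis by (simp add: has_vector_derivative_def)
qed

lemma fd_expand:
  fixes f :: "complex \<Rightarrow> 'b::real_normed_vector"
  assumes "f differentiable (at x)"
  shows "frechet_derivative f (at x) v = Re v *\<^sub>R d1 f x + Im v *\<^sub>R d2 f x"
proof -
  have lin: "linear (frechet_derivative f (at x))" using assms by (rule linear_frechet_derivative)
  have "v = Re v *\<^sub>R 1 + Im v *\<^sub>R \<i>" by (simp add: complex_eq_iff)
  then have "frechet_derivative f (at x) v = frechet_derivative f (at x) (Re v *\<^sub>R 1 + Im v *\<^sub>R \<i>)" by simp
  also have "\<dots> = Re v *\<^sub>R d1 f x + Im v *\<^sub>R d2 f x"
    by (simp add: linear_add[OF lin] linear_cmul[OF lin] d1_def d2_def)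
  finally show ?thesis .
qed

lemma mixed_est:
  fixes f :: "complex \<Rightarrow> 'b::real_normed_vector" and x u w :: complex
  defines "Q \<equiv> \<lambda>a b. x + of_real a * u + of_real b * w"
  defines "Du \<equiv> \<lambda>y. frechet_derivative f (at y) u"
  assumes h: "0 < h"
    and df: "\<And>a b. a \<in> {0..h} \<Longrightarrow> b \<in> {0..h} \<Longrightarrow> f differentiable (at (Q a b))"
    and dDu: "\<And>a b. a \<in> {0..h} \<Longrightarrow> b \<in> {0..h} \<Longrightarrow> Du differentiable (at (Q a b))"
    and M: "\<And>a b. a \<in> {0..h} \<Longrightarrow> b \<in> {0..h} \<Longrightarrow> norm (frechet_derivative Du (at (Q a b)) w - A) \<le> e"
  shows "norm (f (Q h h) - f (Q h 0) - f (Q 0 h) + f (Q 0 0) - (h * h) *\<^sub>R A) \<le> 9 * e * (h * h)"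
proof -
  have e0: "0 \<le> e" using M[of 0 0] h by (auto intro: order_trans[OF norm_ge_zero])
  have F1: "norm (Du (Q a h) - Du (Q a 0) - h *\<^sub>R A) \<le> 3 * e * h" if a: "a \<in> {0..h}" for a
  proof -
    let ?psi = "\<lambda>b. Du (x + of_real a * u + of_real b * w)"
    let ?psi' = "\<lambda>b. frechet_derivative Du (at (Q a b)) w"
    have d: "(?psi has_vector_derivative ?psi' b) (at b within {0..h})" if "b \<in> {0..h}" for b
      using dirderiv[of Du "x + of_real a * u" b w "{0..h}"] dDu[OF a that] by (simp add: Q_def)
    have bnd: "norm (?psi' b - ?psi' 0) \<le> 2 * e" if "b \<in> {0..h}" for b
    proof -
      have "norm (?psi' b - ?psi' 0) \<le> norm (?psi' b - A) + norm (?psi' 0 - A)"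
        by (metis norm_diff_triangle_le norm_minus_commute order_refl)
      also have "\<dots> \<le> 2 * e" using M[OF a that] M[OF a, of 0] h by auto
      finally show ?thesis .
    qed
    have "norm (?psi h - ?psi 0 - (h - 0) *\<^sub>R ?psi' 0) \<le> norm (h - 0) * (2 * e)"
      by (rule vector_differentiable_bound_linearization[OF d _ bnd]) (use h in \<open>auto simp: closed_segment_eq_real_ivl\<close>)
    then have 1: "norm (Du (Q a h) - Du (Q a 0) - h *\<^sub>R ?psi' 0) \<le> h * (2 * e)"
      using h by (simp add: Q_def)
    have 2: "norm (h *\<^sub>R ?psi' 0 - h *\<^sub>R A) \<le> h * e"
      using M[OF a, of 0] h by (simp add: scaleR_diff_right[symmetric] mult_left_mono)
    have "norm (Du (Q a h) - Du (Q a 0) - h *\<^sub>R A) \<le> norm (Du (Q a h) - Du (Q a 0) - h *\<^sub>R ?psi' 0) + norm (h *\<^sub>R ?psi' 0 - h *\<^sub>R A)"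
      by (rule order_trans[OF _ norm_triangle_ineq]) (simp add: algebra_simps)
    also have "\<dots> \<le> 3 * e * h" using 1 2 by (simp add: algebra_simps)
    finally show ?thesis .
  qed
  let ?phi = "\<lambda>a. f (x + of_real h * w + of_real a * u) - f (x + of_real 0 * w + of_real a * u)"
  let ?phi' = "\<lambda>a. Du (Q a h) - Du (Q a 0)"
  have qe: "x + of_real c * w + of_real a * u = Q a c" for a c by (simp add: Q_def algebra_simps)
  have d: "(?phi has_vector_derivative ?phi' a) (at a within {0..h})" if a: "a \<in> {0..h}" for a
  proof -
    have d1: "((\<lambda>a. f (x + of_real h * w + of_real a * u)) has_vector_derivative Du (Q a h)) (at a within {0..h})"
      using dirderiv[of f "x + of_real h * w" a u "{0..h}"] df[OF a, of h] h by (simp add: qe Du_def)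
    have d2: "((\<lambda>a. f (x + of_real 0 * w + of_real a * u)) has_vector_derivative Du (Q a 0)) (at a within {0..h})"
      using dirderiv[of f "x + of_real 0 * w" a u "{0..h}"] df[OF a, of 0] h by (simp add: qe[of 0, simplified] Du_def)
    show ?thesis by (rule has_vector_derivative_diff[OF d1 d2])
  qed
  have bnd: "norm (?phi' a - ?phi' 0) \<le> 6 * e * h" if "a \<in> {0..h}" for a
  proof -
    have "norm (?phi' a - ?phi' 0) \<le> norm (?phi' a - h *\<^sub>R A) + norm (?phi' 0 - h *\<^sub>R A)"
      by (metis norm_diff_triangle_le norm_minus_commute order_refl)
    also have "\<dots> \<le> 6 * e * h" using F1[OF that] F1[of 0] h by auto
    finally show ?thesis .
  qed
  have "norm (?phi h - ?phi 0 - (h - 0) *\<^sub>R ?phi' 0) \<le> norm (h - 0) * (6 * e * h)"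
    by (rule vector_differentiable_bound_linearization[OF d _ bnd]) (use h in \<open>auto simp: closed_segment_eq_real_ivl\<close>)
  moreover have "?phi h - ?phi 0 - (h - 0) *\<^sub>R ?phi' 0 = f (Q h h) - f (Q h 0) - f (Q 0 h) + f (Q 0 0) - h *\<^sub>R ?phi' 0"
    by (simp only: qe) (simp add: algebra_simps)
  ultimately have 1: "norm (f (Q h h) - f (Q h 0) - f (Q 0 h) + f (Q 0 0) - h *\<^sub>R ?phi' 0) \<le> h * (6 * e * h)"
    using h by simp
  have 2: "norm (h *\<^sub>R ?phi' 0 - (h * h) *\<^sub>R A) \<le> h * (3 * e * h)"
  proof -
    have "h *\<^sub>R ?phi' 0 - (h * h) *\<^sub>R A = h *\<^sub>R (?phi' 0 - h *\<^sub>R A)"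
      by (simp add: scaleR_diff_right)
    then have "norm (h *\<^sub>R ?phi' 0 - (h * h) *\<^sub>R A) = h * norm (?phi' 0 - h *\<^sub>R A)"
      using h by simp
    also have "\<dots> \<le> h * (3 * e * h)" using F1[of 0] h by (simp add: mult_left_mono)
    finally show ?thesis .
  qed
  have "norm (f (Q h h) - f (Q h 0) - f (Q 0 h) + f (Q 0 0) - (h * h) *\<^sub>R A)
      \<le> norm (f (Q h h) - f (Q h 0) - f (Q 0 h) + f (Q 0 0) - h *\<^sub>R ?phi' 0) + norm (h *\<^sub>R ?phi' 0 - (h * h) *\<^sub>R A)"
    by (rule order_trans[OF _ norm_triangle_ineq]) (simp add: algebra_simps)
  also have "\<dots> \<le> 9 * e * (h * h)" using 1 2 by (simp add: algebra_simps)
  finally show ?thesis .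
qed

lemma clairaut:
  fixes f :: "complex \<Rightarrow> 'b::real_normed_vector"
  assumes C2: "C2_on S f" and x: "x \<in> S"
  shows "d2 (d1 f) x = d1 (d2 f) x"
proof -
  from C2 have S: "open S" and df: "f differentiable_on S" and dd1: "d1 f differentiable_on S"
    and dd2: "d2 f differentiable_on S" and c21: "continuous_on S (d2 (d1 f))"
    and c12: "continuous_on S (d1 (d2 f))" by (auto simp: C2_on_def C1_on_def)
  have diffat: "g differentiable (at y)" if "g differentiable_on S" "y \<in> S" for g :: "complex \<Rightarrow> 'b" and y
    using that S by (metis at_within_open differentiable_on_def)
  define A where "A = d2 (d1 f) x"
  define B where "B = d1 (d2 f) x"
  have est: "norm (A - B) \<le> 18 * e" if e: "e > 0" for e
  proof -
    obtain da where da: "da > 0" "\<And>y. y \<in> S \<Longrightarrow> dist y x < da \<Longrightarrow> dist (d2 (d1 f) y) A < e"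
      using c21 x e unfolding continuous_on_iff A_def by blast
    obtain db where db: "db > 0" "\<And>y. y \<in> S \<Longrightarrow> dist y x < db \<Longrightarrow> dist (d1 (d2 f) y) B < e"
      using c12 x e unfolding continuous_on_iff B_def by blast
    obtain d0 where d0: "d0 > 0" "ball x d0 \<subseteq> S" using S x open_contains_ball by blast
    define h where "h = min d0 (min da db) / 3"
    have h: "h > 0" using d0 da db by (simp add: h_def)
    have inS: "x + of_real a * u + of_real b * w \<in> S \<and> dist (x + of_real a * u + of_real b * w) x < min d0 (min da db)"
      if "a \<in> {0..h}" "b \<in> {0..h}" "norm u = 1" "norm w = 1" for a b u w
    proof -
      have "dist (x + of_real a * u + of_real b * w) x = norm (of_real a * u + of_real b * w)"
        by (simp add: dist_norm)
      also have "\<dots> \<le> norm (of_real a * u) + norm (of_real b * w)" by (rule norm_triangle_ineq)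
      also have "\<dots> = a + b" using that by (simp add: norm_mult)
      also have "\<dots> < min d0 (min da db)" using that h by (simp add: h_def)
      finally have "dist (x + of_real a * u + of_real b * w) x < min d0 (min da db)" .
      moreover then have "x + of_real a * u + of_real b * w \<in> S" using d0 by (auto simp: dist_commute)
      ultimately show ?thesis by simp
    qed
    have d1eq: "(\<lambda>y. frechet_derivative f (at y) 1) = d1 f" by (simp add: fun_eq_iff d1_def)
    have d2eq: "(\<lambda>y. frechet_derivative f (at y) \<i>) = d2 f" by (simp add: fun_eq_iff d2_def)
    have E1: "norm (f (x + of_real h * 1 + of_real h * \<i>) - f (x + of_real h * 1 + of_real 0 * \<i>)
        - f (x + of_real 0 * 1 + of_real h * \<i>) + f (x + of_real 0 * 1 + of_real 0 * \<i>) - (h * h) *\<^sub>R A) \<le> 9 * e * (h * h)"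
    proof (rule mixed_est[where f=f and x=x and u=1 and w=\<i>, OF h])
      fix a b assume ab: "a \<in> {0..h}" "b \<in> {0..h}"
      note I = inS[OF ab, of 1 \<i>]
      show "f differentiable at (x + of_real a * 1 + of_real b * \<i>)" using diffat[OF df] I by simp
      show "(\<lambda>y. frechet_derivative f (at y) 1) differentiable at (x + of_real a * 1 + of_real b * \<i>)"
        unfolding d1eq using diffat[OF dd1] I by simp
      show "norm (frechet_derivative (\<lambda>y. frechet_derivative f (at y) 1) (at (x + of_real a * 1 + of_real b * \<i>)) \<i> - A) \<le> e"
        unfolding d1eq using da(2)[of "x + of_real a * 1 + of_real b * \<i>"] I
        by (simp add: d2_def[symmetric] dist_norm)
    qed
    have E2: "norm (f (x + of_real h * \<i> + of_real h * 1) - f (x + of_real h * \<i> + of_real 0 * 1)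
        - f (x + of_real 0 * \<i> + of_real h * 1) + f (x + of_real 0 * \<i> + of_real 0 * 1) - (h * h) *\<^sub>R B) \<le> 9 * e * (h * h)"
    proof (rule mixed_est[where f=f and x=x and u=\<i> and w=1, OF h])
      fix a b assume ab: "a \<in> {0..h}" "b \<in> {0..h}"
      note I = inS[OF ab, of \<i> 1]
      show "f differentiable at (x + of_real a * \<i> + of_real b * 1)" using diffat[OF df] I by simp
      show "(\<lambda>y. frechet_derivative f (at y) \<i>) differentiable at (x + of_real a * \<i> + of_real b * 1)"
        unfolding d2eq using diffat[OF dd2] I by simp
      show "norm (frechet_derivative (\<lambda>y. frechet_derivative f (at y) \<i>) (at (x + of_real a * \<i> + of_real b * 1)) 1 - B) \<le> e"
        unfolding d2eq using db(2)[of "x + of_real a * \<i> + of_real b * 1"] I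
        by (simp add: d1_def[symmetric] dist_norm)
    qed
    define D where "D = f (x + of_real h + of_real h * \<i>) - f (x + of_real h) - f (x + of_real h * \<i>) + f x"
    have E1': "norm (D - (h * h) *\<^sub>R A) \<le> 9 * e * (h * h)" using E1 by (simp add: D_def)
    have E2': "norm (D - (h * h) *\<^sub>R B) \<le> 9 * e * (h * h)" using E2 by (simp add: D_def add_ac diff_diff_eq)
    have "norm ((h * h) *\<^sub>R (A - B)) \<le> norm (D - (h * h) *\<^sub>R B) + norm (D - (h * h) *\<^sub>R A)"
      by (rule order_trans[OF _ norm_triangle_ineq4]) (simp add: algebra_simps)
    also have "\<dots> \<le> (h * h) * (18 * e)" using E1' E2' by (simp add: algebra_simps)
    finally have "(h * h) * norm (A - B) \<le> (h * h) * (18 * e)" using h by simp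
    then show ?thesis using h by (simp add: mult_le_cancel_left)
  qed
  show ?thesis
  proof (rule ccontr)
    assume "d2 (d1 f) x \<noteq> d1 (d2 f) x"
    then have "norm (A - B) > 0" by (simp add: A_def B_def)
    with est[of "norm (A - B) / 36"] show False by simp
  qed
qed

lemma ftc_polar:
  fixes G Gr H Ht K :: "real \<Rightarrow> real \<Rightarrow> real"
  assumes R: "0 < R"
    and contG: "continuous_on ({0..R} \<times> {0..2*pi}) (\<lambda>(r,t). G r t)"
    and G0: "\<And>t. t \<in> {0..2*pi} \<Longrightarrow> G 0 t = 0"
    and dG: "\<And>r t. r \<in> {0<..<R} \<Longrightarrow> t \<in> {0..2*pi} \<Longrightarrow> ((\<lambda>r. G r t) has_real_derivative Gr r t) (at r)"
    and contGr: "continuous_on ({0<..<R} \<times> {0..2*pi}) (\<lambda>(r,t). Gr r t)"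
    and dH: "\<And>r t. r \<in> {0<..<R} \<Longrightarrow> t \<in> {0..2*pi} \<Longrightarrow> ((\<lambda>t. H r t) has_real_derivative Ht r t) (at t within {0..2*pi})"
    and Hper: "\<And>r. r \<in> {0<..<R} \<Longrightarrow> H r 0 = H r (2*pi)"
    and K: "\<And>r t. r \<in> {0<..<R} \<Longrightarrow> t \<in> {0..2*pi} \<Longrightarrow> Gr r t + Ht r t = K r t"
    and contK: "continuous_on ({0..R} \<times> {0..2*pi}) (\<lambda>(r,t). K r t)"
  shows "integral {0..R} (\<lambda>r. integral {0..2*pi} (K r)) = integral {0..2*pi} (G R)"
proof -
  define g where "g r = integral {0..2*pi} (G r)" for r
  have cg: "continuous_on {0..R} g"
    unfolding g_def using integral_continuous_on_param[of "{0..R}" 0 "2*pi" G] contG by simp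
  have Kint: "K r integrable_on {0..2*pi}" if "r \<in> {0..R}" for r
  proof -
    have "continuous_on {0..2*pi} (K r)"
      by (rule continuous_on_compose2[OF contK, of _ "\<lambda>t. (r,t)", simplified])
         (use that in \<open>auto intro: continuous_intros\<close>)
    then show ?thesis by (rule integrable_continuous_real)
  qed
  have Gint: "G r integrable_on {0..2*pi}" if "r \<in> {0..R}" for r
  proof -
    have "continuous_on {0..2*pi} (G r)"
      by (rule continuous_on_compose2[OF contG, of _ "\<lambda>t. (r,t)", simplified])
         (use that in \<open>auto intro: continuous_intros\<close>)
    then show ?thesis by (rule integrable_continuous_real)
  qed
  have Htint: "(Ht r has_integral 0) {0..2*pi}" if r: "r \<in> {0<..<R}" for r
  proof -
    have "(Ht r has_integral H r (2*pi) - H r 0) {0..2*pi}"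
      by (rule fundamental_theorem_of_calculus) (auto intro!: dH[OF r] simp: has_real_derivative_iff_has_vector_derivative[symmetric])
    then show ?thesis using Hper[OF r] by simp
  qed
  have dg: "(g has_vector_derivative integral {0..2*pi} (K r)) (at r)" if r: "r \<in> {0<..<R}" for r
  proof -
    define a where "a = r/2"
    define b where "b = (r+R)/2"
    have ab: "0 < a" "a < r" "r < b" "b < R" using r by (auto simp: a_def b_def)
    have sub: "{a..b} \<subseteq> {0<..<R}" using ab by auto
    have "((\<lambda>x. integral (cbox 0 (2*pi)) (G x)) has_field_derivative integral (cbox 0 (2*pi)) (Gr r)) (at r within {a..b})"
    proof (rule leibniz_rule_field_derivative)
      fix x t assume xt: "x \<in> {a..b}" "t \<in> cbox 0 (2*pi)"
      show "((\<lambda>x. G x t) has_field_derivative Gr x t) (at x within {a..b})" using xt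
      proof -
        assume "x \<in> {a..b}" "t \<in> cbox 0 (2*pi)"
        then have "x \<in> {0<..<R}" "t \<in> {0..2*pi}" using sub by auto
        from has_field_derivative_at_within[OF dG[OF this]] show ?thesis .
      qed
    next
      fix x assume "x \<in> {a..b}"
      then show "G x integrable_on cbox 0 (2*pi)" using Gint sub by auto
    next
      show "continuous_on ({a..b} \<times> cbox 0 (2*pi)) (\<lambda>(x, t). Gr x t)"
        by (rule continuous_on_subset[OF contGr]) (use sub in auto)
    qed (use ab in auto)
    then have "(g has_field_derivative integral {0..2*pi} (Gr r)) (at r)"
      using at_within_Icc_at[of a r b] ab by (simp add: g_def[abs_def])
    moreover have "integral {0..2*pi} (Gr r) = integral {0..2*pi} (K r)"
    proof -
      have "((\<lambda>t. K r t - Ht r t) has_integral integral {0..2*pi} (K r) - 0) {0..2*pi}"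
        by (intro has_integral_diff integrable_integral Kint Htint) (use r in auto)
      moreover have "\<And>t. t \<in> {0..2*pi} \<Longrightarrow> K r t - Ht r t = Gr r t" using K r
        by (metis add_diff_cancel_right')
      ultimately have "(Gr r has_integral integral {0..2*pi} (K r)) {0..2*pi}"
        using has_integral_cong[of "{0..2*pi}" "\<lambda>t. K r t - Ht r t" "Gr r"] by simp
      then show ?thesis by (rule integral_unique)
    qed
    ultimately show ?thesis by (simp add: has_real_derivative_iff_has_vector_derivative[symmetric])
  qed
  have "((\<lambda>r. integral {0..2*pi} (K r)) has_integral g R - g 0) {0..R}"
    by (rule fundamental_theorem_of_calculus_interior) (use R cg dg in auto)
  moreover have "g 0 = 0"
  proof -
    have "g 0 = integral {0..2*pi} (\<lambda>_. 0::real)" unfolding g_def by (rule integral_cong) (simp add: G0)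
    then show ?thesis by simp
  qed
  ultimately show ?thesis by (simp add: g_def integral_unique)
qed

definition X :: "real \<Rightarrow> real \<Rightarrow> complex" where "X r t = of_real r * cis t"

lemma norm_X: "0 \<le> r \<Longrightarrow> norm (X r t) = r"
  by (simp add: X_def norm_mult)

lemma Re_X: "Re (X r t) = r * cos t" and Im_X: "Im (X r t) = r * sin t"
  by (simp_all add: X_def)

lemma rad_vec:
  fixes g :: "complex \<Rightarrow> 'b::real_normed_vector"
  assumes "g differentiable (at (X r t))"
  shows "((\<lambda>r. g (X r t)) has_vector_derivative (cos t *\<^sub>R d1 g (X r t) + sin t *\<^sub>R d2 g (X r t))) (at r within T)"
proof -
  have "((\<lambda>r. g (0 + of_real r * cis t)) has_vector_derivative frechet_derivative g (at (0 + of_real r * cis t)) (cis t)) (at r within T)"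
    by (rule dirderiv) (use assms in \<open>simp add: X_def\<close>)
  then show ?thesis using fd_expand[OF assms, of "cis t"] by (simp add: X_def)
qed

lemma ang_vec:
  fixes g :: "complex \<Rightarrow> 'b::real_normed_vector"
  assumes dg: "g differentiable (at (X r t))"
  shows "((\<lambda>t. g (X r t)) has_vector_derivative ((r * cos t) *\<^sub>R d2 g (X r t) - (r * sin t) *\<^sub>R d1 g (X r t))) (at t within T)"
proof -
  have 1: "((\<lambda>t. X r t) has_derivative (\<lambda>h. h *\<^sub>R (of_real r * (\<i> * cis t)))) (at t within T)"
    unfolding X_def
    by (auto intro!: derivative_eq_intros has_derivative_cis[of "\<lambda>x. x" "\<lambda>x. x", OF has_derivative_ident]
        simp: algebra_simps scaleR_conv_of_real)
  have 2: "(g has_derivative frechet_derivative g (at (X r t))) (at (X r t))"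
    using dg frechet_derivative_works by blast
  have lin: "linear (frechet_derivative g (at (X r t)))" using dg by (rule linear_frechet_derivative)
  from has_derivative_compose[OF 1 2]
  have "((\<lambda>t. g (X r t)) has_derivative (\<lambda>h. frechet_derivative g (at (X r t)) (h *\<^sub>R (of_real r * (\<i> * cis t))))) (at t within T)" .
  moreover have "(\<lambda>h. frechet_derivative g (at (X r t)) (h *\<^sub>R (of_real r * (\<i> * cis t))))
      = (\<lambda>h. h *\<^sub>R ((r * cos t) *\<^sub>R d2 g (X r t) - (r * sin t) *\<^sub>R d1 g (X r t)))"
  proof -
    have fv: "frechet_derivative g (at (X r t)) (of_real r * (\<i> * cis t)) = (r * cos t) *\<^sub>R d2 g (X r t) - (r * sin t) *\<^sub>R d1 g (X r t)"
      using fd_expand[OF dg, of "of_real r * (\<i> * cis t)"] by (simp add: algebra_simps)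
    show ?thesis by (rule ext) (simp only: linear_cmul[OF lin] fv)
  qed
  ultimately show ?thesis by (simp add: has_vector_derivative_def)
qed

lemma bl_vd:
  assumes "bounded_linear L" "(f has_vector_derivative f') F"
  shows "((\<lambda>x. L (f x)) has_vector_derivative L f') F"
proof -
  from bounded_linear.has_derivative[OF assms(1) assms(2)[unfolded has_vector_derivative_def]]
  show ?thesis unfolding has_vector_derivative_def
    using linear_cmul[OF bounded_linear.linear[OF assms(1)]] by simp
qed

lemma rad_lin:
  fixes g :: "complex \<Rightarrow> 'b::real_normed_vector" and L :: "'b \<Rightarrow> real"
  assumes "bounded_linear L" "g differentiable (at (X r t))"
  shows "((\<lambda>r. L (g (X r t))) has_real_derivative (cos t * L (d1 g (X r t)) + sin t * L (d2 g (X r t)))) (at r within T)"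
proof -
  from bl_vd[OF assms(1) rad_vec[OF assms(2)]]
  show ?thesis
    by (simp add: has_real_derivative_iff_has_vector_derivative linear_add[OF bounded_linear.linear[OF assms(1)]]
        linear_cmul[OF bounded_linear.linear[OF assms(1)]])
qed

lemma ang_lin:
  fixes g :: "complex \<Rightarrow> 'b::real_normed_vector" and L :: "'b \<Rightarrow> real"
  assumes "bounded_linear L" "g differentiable (at (X r t))"
  shows "((\<lambda>t. L (g (X r t))) has_real_derivative (r * cos t * L (d2 g (X r t)) - r * sin t * L (d1 g (X r t)))) (at t within T)"
proof -
  from bl_vd[OF assms(1) ang_vec[OF assms(2)]]
  show ?thesis
    by (simp add: has_real_derivative_iff_has_vector_derivative linear_diff[OF bounded_linear.linear[OF assms(1)]]
        linear_cmul[OF bounded_linear.linear[OF assms(1)]])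
qed

lemma rad_real:
  fixes g :: "complex \<Rightarrow> real"
  assumes "g differentiable (at (X r t))"
  shows "((\<lambda>r. g (X r t)) has_real_derivative (cos t * d1 g (X r t) + sin t * d2 g (X r t))) (at r within T)"
  using rad_lin[OF bounded_linear_ident assms] by simp

lemma ang_real:
  fixes g :: "complex \<Rightarrow> real"
  assumes "g differentiable (at (X r t))"
  shows "((\<lambda>t. g (X r t)) has_real_derivative (r * cos t * d2 g (X r t) - r * sin t * d1 g (X r t))) (at t within T)"
  using ang_lin[OF bounded_linear_ident assms] by simp

definition c1 :: "complex \<times> complex \<Rightarrow> real" where "c1 v = Re (fst v)"
definition c2 :: "complex \<times> complex \<Rightarrow> real" where "c2 v = Im (fst v)"
definition c3 :: "complex \<times> complex \<Rightarrow> real" where "c3 v = Re (snd v)"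
definition c4 :: "complex \<times> complex \<Rightarrow> real" where "c4 v = Im (snd v)"

lemma bl_c: "bounded_linear c1" "bounded_linear c2" "bounded_linear c3" "bounded_linear c4"
  unfolding c1_def c2_def c3_def c4_def
  by (auto intro!: bounded_linear_compose[OF bounded_linear_Re] bounded_linear_compose[OF bounded_linear_Im]
      bounded_linear_fst bounded_linear_snd)

lemma c_simps[simp]:
  "c1 (a + b) = c1 a + c1 b" "c2 (a + b) = c2 a + c2 b" "c3 (a + b) = c3 a + c3 b" "c4 (a + b) = c4 a + c4 b"
  "c1 (a - b) = c1 a - c1 b" "c2 (a - b) = c2 a - c2 b" "c3 (a - b) = c3 a - c3 b" "c4 (a - b) = c4 a - c4 b"
  "c1 (k *\<^sub>R a) = k * c1 a" "c2 (k *\<^sub>R a) = k * c2 a" "c3 (k *\<^sub>R a) = k * c3 a" "c4 (k *\<^sub>R a) = k * c4 a"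
  by (simp_all add: c1_def c2_def c3_def c4_def)

lemma inner_c: "inner v w = c1 v * c1 w + c2 v * c2 w + c3 v * c3 w + c4 v * c4 w"
  by (cases v; cases w) (simp add: c1_def c2_def c3_def c4_def inner_Pair inner_complex_def)

lemma norm2_c: "(norm v)^2 = (c1 v)^2 + (c2 v)^2 + (c3 v)^2 + (c4 v)^2"
  by (simp only: power2_norm_eq_inner inner_c) (simp add: power2_eq_square)

definition tf :: "real \<Rightarrow> real \<Rightarrow> real \<Rightarrow> real \<Rightarrow> real \<Rightarrow> real \<Rightarrow> real \<Rightarrow> real \<Rightarrow> real \<Rightarrow> real \<Rightarrow> real" where
 "tf c s w1 w2 w3 w4 z1 z2 z3 z4 = - s*w3*z1 - c*w4*z1 + c*w3*z2 - s*w4*z2 + s*w1*z3 - c*w2*z3 + c*w1*z4 + s*w2*z4"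

lemma tf_inner: "inner (clifford (Complex (-s) c) w) z = tf c s (c1 w) (c2 w) (c3 w) (c4 w) (c1 z) (c2 z) (c3 z) (c4 z)"
  by (cases w; cases z) (simp add: clifford_def tf_def c1_def c2_def c3_def c4_def inner_Pair inner_complex_def algebra_simps)

lemma tf_deriv:
  assumes "(c has_real_derivative c') (at x within S)" "(s has_real_derivative s') (at x within S)"
    "(w1 has_real_derivative w1') (at x within S)" "(w2 has_real_derivative w2') (at x within S)"
    "(w3 has_real_derivative w3') (at x within S)" "(w4 has_real_derivative w4') (at x within S)"
    "(z1 has_real_derivative z1') (at x within S)" "(z2 has_real_derivative z2') (at x within S)"
    "(z3 has_real_derivative z3') (at x within S)" "(z4 has_real_derivative z4') (at x within S)"
  shows "((\<lambda>x. tf (c x) (s x) (w1 x) (w2 x) (w3 x) (w4 x) (z1 x) (z2 x) (z3 x) (z4 x)) has_real_derivative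
     (tf c' s' (w1 x) (w2 x) (w3 x) (w4 x) (z1 x) (z2 x) (z3 x) (z4 x)
      + tf (c x) (s x) w1' w2' w3' w4' (z1 x) (z2 x) (z3 x) (z4 x)
      + tf (c x) (s x) (w1 x) (w2 x) (w3 x) (w4 x) z1' z2' z3' z4')) (at x within S)"
  unfolding tf_def
  by (rule derivative_eq_intros assms refl)+ (simp add: algebra_simps)

lemma clifford_c:
  "c1 (clifford z v) = Re z * c3 v - Im z * c4 v"
  "c2 (clifford z v) = Re z * c4 v + Im z * c3 v"
  "c3 (clifford z v) = - Re z * c1 v - Im z * c2 v"
  "c4 (clifford z v) = - Re z * c2 v + Im z * c1 v"
  by (cases v; simp add: clifford_def c1_def c2_def c3_def c4_def algebra_simps)+

lemma d_lin:
  fixes f :: "complex \<Rightarrow> 'b::real_normed_vector" and L :: "'b \<Rightarrow> 'c::real_normed_vector"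
  assumes L: "bounded_linear L" and df: "f differentiable (at x)"
  shows "d1 (\<lambda>y. L (f y)) x = L (d1 f x)" "d2 (\<lambda>y. L (f y)) x = L (d2 f x)"
proof -
  have "(f has_derivative frechet_derivative f (at x)) (at x)" using df frechet_derivative_works by blast
  from bounded_linear.has_derivative[OF L this]
  have "((\<lambda>y. L (f y)) has_derivative (\<lambda>v. L (frechet_derivative f (at x) v))) (at x)" .
  then have e: "frechet_derivative (\<lambda>y. L (f y)) (at x) = (\<lambda>v. L (frechet_derivative f (at x) v))"
    by (rule frechet_derivative_at[symmetric])
  show "d1 (\<lambda>y. L (f y)) x = L (d1 f x)" "d2 (\<lambda>y. L (f y)) x = L (d2 f x)"
    by (simp_all add: d1_def d2_def e)
qed

lemma dirac_c:
  fixes \<Psi> :: "complex \<Rightarrow> complex \<times> complex"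
  assumes df: "\<Psi> differentiable (at x)" and eq: "dirac \<Psi> x = - h *\<^sub>R \<Psi> x"
  shows "c3 (d1 \<Psi> x) - c4 (d2 \<Psi> x) = - h * c1 (\<Psi> x)"
    "c4 (d1 \<Psi> x) + c3 (d2 \<Psi> x) = - h * c2 (\<Psi> x)"
    "c1 (d1 \<Psi> x) + c2 (d2 \<Psi> x) = h * c3 (\<Psi> x)"
    "c2 (d1 \<Psi> x) - c1 (d2 \<Psi> x) = h * c4 (\<Psi> x)"
proof -
  have s1: "d1 (\<lambda>y. snd (\<Psi> y)) x = snd (d1 \<Psi> x)" "d2 (\<lambda>y. snd (\<Psi> y)) x = snd (d2 \<Psi> x)"
    using d_lin[OF bounded_linear_snd df] by auto
  have f1: "d1 (\<lambda>y. fst (\<Psi> y)) x = fst (d1 \<Psi> x)" "d2 (\<lambda>y. fst (\<Psi> y)) x = fst (d2 \<Psi> x)"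
    using d_lin[OF bounded_linear_fst df] by auto
  have "snd (d1 \<Psi> x) + \<i> * snd (d2 \<Psi> x) = - h *\<^sub>R fst (\<Psi> x)"
    "- (fst (d1 \<Psi> x) - \<i> * fst (d2 \<Psi> x)) = - h *\<^sub>R snd (\<Psi> x)"
    using eq by (auto simp: dirac_def dzbar_def dz_def s1 f1 prod_eq_iff complex_eq_iff)
  then show "c3 (d1 \<Psi> x) - c4 (d2 \<Psi> x) = - h * c1 (\<Psi> x)"
    "c4 (d1 \<Psi> x) + c3 (d2 \<Psi> x) = - h * c2 (\<Psi> x)"
    "c1 (d1 \<Psi> x) + c2 (d2 \<Psi> x) = h * c3 (\<Psi> x)"
    "c2 (d1 \<Psi> x) - c1 (d2 \<Psi> x) = h * c4 (\<Psi> x)"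
    by (simp_all add: c1_def c2_def c3_def c4_def complex_eq_iff)
qed

lemma herm_sum: "herm a b + herm b a = complex_of_real (2 * inner a b)"
  by (cases a; cases b) (simp add: herm_def inner_Pair inner_complex_def complex_eq_iff)

lemma alg_bd:
  fixes P1 P2 Q :: "complex \<times> complex"
  assumes cs: "c^2 + s^2 = 1"
    and D: "c3 P1 - c4 P2 = - h * c1 Q" "c4 P1 + c3 P2 = - h * c2 Q"
           "c1 P1 + c2 P2 = h * c3 Q" "c2 P1 - c1 P2 = h * c4 Q"
  shows "h * (norm Q)^2 + tf c s (c1 (-s *\<^sub>R P1 + c *\<^sub>R P2)) (c2 (-s *\<^sub>R P1 + c *\<^sub>R P2)) (c3 (-s *\<^sub>R P1 + c *\<^sub>R P2)) (c4 (-s *\<^sub>R P1 + c *\<^sub>R P2)) (c1 Q) (c2 Q) (c3 Q) (c4 Q)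
     = inner (c *\<^sub>R P1 + s *\<^sub>R P2) (clifford (Complex c s) Q)"
  using cs D unfolding norm2_c inner_c clifford_c tf_def by (simp add: algebra_simps) algebra

lemma alg_u:
  fixes c s r U1 U2 U11 U12 U22 :: real
  assumes "c^2 + s^2 = 1"
  shows "r * ((c*U1+s*U2)^2 - (c*U2-s*U1)^2) + r^2 * ((c*U1+s*U2) * (c*(c*U11+s*U12) + s*(c*U12+s*U22)) - (c*U2-s*U1)*(c*(c*U12+s*U22) - s*(c*U11+s*U12)))
    + r * ( (-s*U1 + c*U2 + c*(r*(c*U12 - s*U11)) + s*(r*(c*U22 - s*U12))) * (c*U2-s*U1) + (c*U1+s*U2) * (-s*U2 - c*U1 + c*(r*(c*U22-s*U12)) - s*(r*(c*U12 - s*U11))) )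
    = r^2 * (c*U1+s*U2) * (U11+U22)"
  using assms by algebra

lemma alg_S:
  fixes c s r h z1 z2 z3 z4 a1 a2 a3 a4 b1 b2 b3 b4 m1 m2 m3 m4 n1 n2 n3 n4 q1 q2 q3 q4 :: real
  assumes "c^2 + s^2 = 1"
   and D: "a3 - b4 = -h*z1" "a4 + b3 = -h*z2" "a1 + b2 = h*z3" "a2 - b1 = h*z4"
  shows "(-2*r*tf c s (-s*a1+c*b1) (-s*a2+c*b2) (-s*a3+c*b3) (-s*a4+c*b4) z1 z2 z3 z4
    - r^2 * (tf c s (-s*(c*m1+s*n1)+c*(c*n1+s*q1)) (-s*(c*m2+s*n2)+c*(c*n2+s*q2)) (-s*(c*m3+s*n3)+c*(c*n3+s*q3)) (-s*(c*m4+s*n4)+c*(c*n4+s*q4)) z1 z2 z3 z4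
             + tf c s (-s*a1+c*b1) (-s*a2+c*b2) (-s*a3+c*b3) (-s*a4+c*b4) (c*a1+s*b1) (c*a2+s*b2) (c*a3+s*b3) (c*a4+s*b4)))
   + r * (tf (-s) c (c*a1+s*b1) (c*a2+s*b2) (c*a3+s*b3) (c*a4+s*b4) z1 z2 z3 z4
       + tf c s (-s*a1+c*b1 + r*(c*(c*n1-s*m1)+s*(c*q1-s*n1))) (-s*a2+c*b2 + r*(c*(c*n2-s*m2)+s*(c*q2-s*n2)))
                (-s*a3+c*b3 + r*(c*(c*n3-s*m3)+s*(c*q3-s*n3))) (-s*a4+c*b4 + r*(c*(c*n4-s*m4)+s*(c*q4-s*n4))) z1 z2 z3 z4
       + tf c s (c*a1+s*b1) (c*a2+s*b2) (c*a3+s*b3) (c*a4+s*b4) (r*(-s*a1+c*b1)) (r*(-s*a2+c*b2)) (r*(-s*a3+c*b3)) (r*(-s*a4+c*b4)))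
   = r*h*(z1^2+z2^2+z3^2+z4^2) + 2*r^2*h*((c*a1+s*b1)*z1 + (c*a2+s*b2)*z2 + (c*a3+s*b3)*z3 + (c*a4+s*b4)*z4)"
  using assms unfolding tf_def by algebra

lemma continuous_X: "continuous_on B (\<lambda>p. X (fst p) (snd p))"
  unfolding X_def cis_conv_exp by (intro continuous_intros)

lemma cont_polar:
  assumes "continuous_on A \<phi>" "\<And>p. p \<in> B \<Longrightarrow> X (fst p) (snd p) \<in> A"
  shows "continuous_on B (\<lambda>p. \<phi> (X (fst p) (snd p)))"
  by (rule continuous_on_compose2[OF assms(1) continuous_X]) (use assms(2) in auto)

lemma cont_polarL:
  assumes "bounded_linear L" "continuous_on A \<phi>" "\<And>p. p \<in> B \<Longrightarrow> X (fst p) (snd p) \<in> A"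
  shows "continuous_on B (\<lambda>p. L (\<phi> (X (fst p) (snd p))))"
  by (rule continuous_on_compose2[OF linear_continuous_on[OF assms(1)] cont_polar[OF assms(2,3)]]) auto

lemma rpow_deriv:
  assumes "0 < x"
  shows "((\<lambda>x. rpow x a) has_real_derivative a * rpow x a / x) (at x within T)"
proof (cases "a = 0")
  case True then show ?thesis by (simp add: rpow_def)
next
  case False
  have "((\<lambda>x. x powr a) has_real_derivative a * x powr (a - 1)) (at x)"
    by (rule has_real_derivative_powr[OF assms])
  moreover have "a * x powr (a - 1) = a * x powr a / x" using assms by (simp add: powr_diff)
  ultimately show ?thesis using False by (simp add: rpow_def has_field_derivative_at_within)
qed

lemma cont_rpow:
  assumes "0 \<le> a"
  shows "continuous_on {0..} (\<lambda>x. rpow x a)"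
proof (cases "a = 0")
  case True then show ?thesis by (simp add: rpow_def)
next
  case False
  then have "continuous_on {0..} (\<lambda>x::real. x powr a)"
    using assms by (intro continuous_on_powr') (auto intro: continuous_intros)
  then show ?thesis using False by (simp add: rpow_def)
qed

lemma cont_rpow_norm:
  assumes "0 \<le> a"
  shows "continuous_on A (\<lambda>x. rpow (norm x) a)"
  by (rule continuous_on_compose2[OF cont_rpow[OF assms]]) (auto intro: continuous_intros)

lemma cont_rpow_fst:
  assumes "0 \<le> a" "\<And>p. p \<in> B \<Longrightarrow> 0 \<le> fst p"
  shows "continuous_on B (\<lambda>p. rpow (fst p) a)"
  by (rule continuous_on_compose2[OF cont_rpow[OF assms(1)]]) (use assms(2) in \<open>auto intro: continuous_intros\<close>)

lemma sgn_X: "0 < r \<Longrightarrow> sgn (X r t) = cis t"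
  by (simp add: X_def sgn_mult sgn_of_real)

lemma inner_grad: "y \<bullet> grad f y = Re y * d1 f y + Im y * d2 f y"
  by (simp add: grad_def inner_complex_def)

lemma norm_grad2: "(norm (grad f y))^2 = (d1 f y)^2 + (d2 f y)^2"
  by (simp add: grad_def cmod_power2)

lemma gradV2:
  fixes V :: "complex \<Rightarrow> real"
  assumes "V differentiable (at y)"
  shows "d1 (\<lambda>y. (V y)^2) y = 2 * V y * d1 V y" "d2 (\<lambda>y. (V y)^2) y = 2 * V y * d2 V y"
proof -
  have "(V has_derivative frechet_derivative V (at y)) (at y)" using assms frechet_derivative_works by blast
  then have "((\<lambda>y. (V y)^2) has_derivative (\<lambda>v. 2 * V y * frechet_derivative V (at y) v)) (at y)"
    by (auto intro!: derivative_eq_intros simp: power2_eq_square algebra_simps)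
  then have e: "frechet_derivative (\<lambda>y. (V y)^2) (at y) = (\<lambda>v. 2 * V y * frechet_derivative V (at y) v)"
    by (rule frechet_derivative_at[symmetric])
  show "d1 (\<lambda>y. (V y)^2) y = 2 * V y * d1 V y" "d2 (\<lambda>y. (V y)^2) y = 2 * V y * d2 V y"
    by (simp_all add: d1_def d2_def e)
qed

lemma normal_deriv_X:
  fixes f :: "complex \<Rightarrow> 'b::real_normed_vector"
  assumes "0 < r" "f differentiable (at (X r t))"
  shows "normal_deriv f (X r t) = cos t *\<^sub>R d1 f (X r t) + sin t *\<^sub>R d2 f (X r t)"
  using fd_expand[OF assms(2), of "cis t"] assms(1) by (simp add: normal_deriv_def sgn_X)

lemma clifford_scale: "clifford (of_real a * z) v = a *\<^sub>R clifford z v"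
  by (cases v) (simp add: clifford_def algebra_simps scaleR_conv_of_real)

lemma i_cis: "\<i> * cis t = Complex (- sin t) (cos t)" and cis_Complex: "cis t = Complex (cos t) (sin t)"
  by (simp_all add: complex_eq_iff)

lemma circle_integral_X: "circle_integral R F = integral {0..2*pi} (\<lambda>t. R *\<^sub>R F (X R t))"
  by (simp add: circle_integral_def X_def)

theorem proposition4p3:
  fixes \<alpha> \<beta> a b r R :: real
    and V u :: "complex \<Rightarrow> real"
    and \<Psi> :: "complex \<Rightarrow> complex \<times> complex"
  assumes alpha: "\<alpha> \<ge> 0"
    and beta: "0 < \<beta>" "\<beta> < 1"
    and V_reg: "C1_holder_on \<beta> (ball 0 r) V"
    and V_bounds: "0 < a" "\<forall>x\<in>ball 0 r. a \<le> V x \<and> V x \<le> b"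
    and u_C2: "C2_on (ball 0 r) u"
    and Psi_C2: "C2_on (ball 0 r) \<Psi>"
    and eq_u: "\<forall>x\<in>ball 0 r. - laplacian u x =
        2 * (V x)\<^sup>2 * rpow (norm x) (2*\<alpha>) * exp (2 * u x)
        - V x * rpow (norm x) \<alpha> * exp (u x) * (norm (\<Psi> x))\<^sup>2"
    and eq_Psi: "\<forall>x\<in>ball 0 r. dirac \<Psi> x = - (V x * rpow (norm x) \<alpha> * exp (u x)) *\<^sub>R \<Psi> x"
    and finite_energy: "(\<integral>\<^sup>+ x\<in>ball 0 r. ennreal (rpow (norm x) (2*\<alpha>) * exp (2 * u x)
        + (norm (\<Psi> x)) ^ 4) \<partial>lborel) < \<infinity>"
    and R: "0 < R" "R < r"
  shows "complex_of_real (R * circle_integral R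
            (\<lambda>x. (normal_deriv u x)\<^sup>2 - 1/2 * (norm (grad u x))\<^sup>2))
       = complex_of_real ((1 + \<alpha>) * integral (ball 0 R)
            (\<lambda>x. 2 * (V x)\<^sup>2 * rpow (norm x) (2*\<alpha>) * exp (2 * u x)
                 - V x * rpow (norm x) \<alpha> * exp (u x) * (norm (\<Psi> x))\<^sup>2)
          - R * circle_integral R (\<lambda>x. (V x)\<^sup>2 * rpow (norm x) (2*\<alpha>) * exp (2 * u x)))
       + 1/2 * circle_integral R
            (\<lambda>x. herm (normal_deriv \<Psi> x) (clifford x (\<Psi> x))
                 + herm (clifford x (\<Psi> x)) (normal_deriv \<Psi> x))
       + complex_of_real (integral (ball 0 R)
            (\<lambda>x. rpow (norm x) (2*\<alpha>) * exp (2 * u x) * (x \<bullet> grad (\<lambda>y. (V y)\<^sup>2) x)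
                 - rpow (norm x) \<alpha> * exp (u x) * (norm (\<Psi> x))\<^sup>2 * (x \<bullet> grad V x)))"
proof -
  define S where "S = ball (0::complex) r"
  have oS: "open S" by (simp add: S_def)
  have R0: "0 < R" and Rr: "R < r" using R by auto
  have cbS: "cball 0 R \<subseteq> S" using Rr by (auto simp: S_def)
  have Xcb: "X \<rho> t \<in> cball 0 R" if "0 \<le> \<rho>" "\<rho> \<le> R" for \<rho> t
    using that norm_X[of \<rho> t] by simp
  have XS: "X \<rho> t \<in> S" if "0 \<le> \<rho>" "\<rho> \<le> R" for \<rho> t
    using Xcb[OF that] cbS by blast
  have XSp: "X (fst p) (snd p) \<in> S" if "p \<in> {0..R} \<times> {0..2*pi}" for p
    using XS that by (auto simp: mem_Times_iff)
  have XSp': "X (fst p) (snd p) \<in> S" if "p \<in> {0<..<R} \<times> {0..2*pi}" for p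
    using XS that by (auto simp: mem_Times_iff)
  have uC: "C1_on S u" "C1_on S (d1 u)" "C1_on S (d2 u)" using u_C2 by (simp_all add: C2_on_def S_def)
  have PC: "C1_on S \<Psi>" "C1_on S (d1 \<Psi>)" "C1_on S (d2 \<Psi>)" using Psi_C2 by (simp_all add: C2_on_def S_def)
  have VC: "C1_on S V" using V_reg by (simp add: C1_holder_on_def S_def)
  have datR: "g differentiable (at y)" if "C1_on S g" "y \<in> S" for g :: "complex \<Rightarrow> real" and y
    using that oS by (metis C1_on_def at_within_open differentiable_on_def)
  have datP: "g differentiable (at y)" if "C1_on S g" "y \<in> S" for g :: "complex \<Rightarrow> complex \<times> complex" and y
    using that oS by (metis C1_on_def at_within_open differentiable_on_def)
  have contR: "continuous_on S g" "continuous_on S (d1 g)" "continuous_on S (d2 g)" if "C1_on S g" for g :: "complex \<Rightarrow> real"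
    using that by (auto simp: C1_on_def intro: differentiable_imp_continuous_on)
  have contP: "continuous_on S g" "continuous_on S (d1 g)" "continuous_on S (d2 g)" if "C1_on S g" for g :: "complex \<Rightarrow> complex \<times> complex"
    using that by (auto simp: C1_on_def intro: differentiable_imp_continuous_on)
  have clu: "d1 (d2 u) y = d2 (d1 u) y" if "y \<in> S" for y
    using clairaut[OF u_C2, of y] that by (simp add: S_def)
  have clP: "d1 (d2 \<Psi>) y = d2 (d1 \<Psi>) y" if "y \<in> S" for y
    using clairaut[OF Psi_C2, of y] that by (simp add: S_def)
  have a0: "0 \<le> \<alpha>" "0 \<le> 2*\<alpha>" using alpha by auto
  have cS: "continuous_on S u" "continuous_on S V" "continuous_on S \<Psi>" "continuous_on S (d1 V)" "continuous_on S (d2 V)"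
    using contR[OF uC(1)] contR[OF VC] contP[OF PC(1)] by auto
  have dV: "V differentiable (at y)" if "y \<in> S" for y using datR[OF VC that] .
  define F where "F y = 2 * (V y)\<^sup>2 * rpow (norm y) (2*\<alpha>) * exp (2 * u y)
                 - V y * rpow (norm y) \<alpha> * exp (u y) * (norm (\<Psi> y))\<^sup>2" for y
  define W where "W y = rpow (norm y) (2*\<alpha>) * exp (2 * u y) * (y \<bullet> grad (\<lambda>y. (V y)\<^sup>2) y)
                 - rpow (norm y) \<alpha> * exp (u y) * (norm (\<Psi> y))\<^sup>2 * (y \<bullet> grad V y)" for y
  define \<Phi> where "\<Phi> y = (1 + \<alpha>) * F y + W y" for y
  have Weq: "W y = rpow (norm y) (2*\<alpha>) * exp (2 * u y) * (2 * V y * (Re y * d1 V y + Im y * d2 V y))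
                 - rpow (norm y) \<alpha> * exp (u y) * (norm (\<Psi> y))\<^sup>2 * (Re y * d1 V y + Im y * d2 V y)" if "y \<in> S" for y
    unfolding W_def inner_grad gradV2[OF dV[OF that]] by (simp add: algebra_simps)
  have cF: "continuous_on (cball 0 R) F"
    unfolding F_def
    by (rule continuous_on_subset[OF _ cbS])
       (intro continuous_intros cS cont_rpow_norm a0)
  have cW': "continuous_on S (\<lambda>y. rpow (norm y) (2*\<alpha>) * exp (2 * u y) * (2 * V y * (Re y * d1 V y + Im y * d2 V y))
                 - rpow (norm y) \<alpha> * exp (u y) * (norm (\<Psi> y))\<^sup>2 * (Re y * d1 V y + Im y * d2 V y))"
    by (intro continuous_intros cS cont_rpow_norm a0)
  have cW: "continuous_on (cball 0 R) W"
    by (rule continuous_on_subset[OF _ cbS], rule continuous_on_cong[THEN iffD1, OF refl _ cW'])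
       (simp add: Weq)
  have cPhi: "continuous_on (cball 0 R) \<Phi>"
    unfolding \<Phi>_def by (intro continuous_intros cF cW)
  have iF: "F integrable_on ball 0 R" using polar_integral[OF cF] by blast
  have iW: "W integrable_on ball 0 R" using polar_integral[OF cW] by blast
  have IPhi: "(1 + \<alpha>) * integral (ball 0 R) F + integral (ball 0 R) W = integral (ball 0 R) \<Phi>"
  proof -
    have "(\<lambda>y. (1 + \<alpha>) * F y) integrable_on ball 0 R" using integrable_on_cmult_left[OF iF, of "1 + \<alpha>"] by simp
    then have "integral (ball 0 R) (\<lambda>y. (1 + \<alpha>) * F y + W y) = integral (ball 0 R) (\<lambda>y. (1 + \<alpha>) * F y) + integral (ball 0 R) W"
      using iW by (rule integral_add)
    then show ?thesis unfolding \<Phi>_def by (simp add: integral_mult_right)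
  qed
  have Ppolar: "integral (ball 0 R) \<Phi> = integral {0..R} (\<lambda>\<rho>. integral {0..2*pi} (\<lambda>t. \<rho> * \<Phi> (X \<rho> t)))"
    using polar_integral[OF cPhi] by (simp add: X_def integral_unique)
  define U0 where "U0 \<rho> t = u (X \<rho> t)" for \<rho> t
  define U1 where "U1 \<rho> t = d1 u (X \<rho> t)" for \<rho> t
  define U2 where "U2 \<rho> t = d2 u (X \<rho> t)" for \<rho> t
  define U11 where "U11 \<rho> t = d1 (d1 u) (X \<rho> t)" for \<rho> t
  define U12 where "U12 \<rho> t = d2 (d1 u) (X \<rho> t)" for \<rho> t
  define U22 where "U22 \<rho> t = d2 (d2 u) (X \<rho> t)" for \<rho> t
  define VV where "VV \<rho> t = V (X \<rho> t)" for \<rho> t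
  define VD1 where "VD1 \<rho> t = d1 V (X \<rho> t)" for \<rho> t
  define VD2 where "VD2 \<rho> t = d2 V (X \<rho> t)" for \<rho> t
  define PS where "PS L \<rho> t = L (\<Psi> (X \<rho> t))" for L :: "complex \<times> complex \<Rightarrow> real" and \<rho> t
  define PA where "PA L \<rho> t = L (d1 \<Psi> (X \<rho> t))" for L :: "complex \<times> complex \<Rightarrow> real" and \<rho> t
  define PB where "PB L \<rho> t = L (d2 \<Psi> (X \<rho> t))" for L :: "complex \<times> complex \<Rightarrow> real" and \<rho> t
  define PM where "PM L \<rho> t = L (d1 (d1 \<Psi>) (X \<rho> t))" for L :: "complex \<times> complex \<Rightarrow> real" and \<rho> t
  define PN where "PN L \<rho> t = L (d2 (d1 \<Psi>) (X \<rho> t))" for L :: "complex \<times> complex \<Rightarrow> real" and \<rho> t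
  define PQ where "PQ L \<rho> t = L (d2 (d2 \<Psi>) (X \<rho> t))" for L :: "complex \<times> complex \<Rightarrow> real" and \<rho> t
  have dU0r: "((\<lambda>\<rho>. U0 \<rho> t) has_real_derivative (cos t * U1 \<rho> t + sin t * U2 \<rho> t)) (at \<rho> within T)"
    if "0 \<le> \<rho>" "\<rho> \<le> R" for \<rho> t T
    using rad_real[OF datR[OF uC(1) XS[OF that]]] by (simp add: U0_def U1_def U2_def)
  have dU1r: "((\<lambda>\<rho>. U1 \<rho> t) has_real_derivative (cos t * U11 \<rho> t + sin t * U12 \<rho> t)) (at \<rho> within T)"
    if "0 \<le> \<rho>" "\<rho> \<le> R" for \<rho> t T
    using rad_real[OF datR[OF uC(2) XS[OF that]]] by (simp add: U1_def U11_def U12_def)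
  have dU2r: "((\<lambda>\<rho>. U2 \<rho> t) has_real_derivative (cos t * U12 \<rho> t + sin t * U22 \<rho> t)) (at \<rho> within T)"
    if "0 \<le> \<rho>" "\<rho> \<le> R" for \<rho> t T
    using rad_real[OF datR[OF uC(3) XS[OF that]]] clu[OF XS[OF that]] by (simp add: U2_def U12_def U22_def)
  have dU0t: "((\<lambda>t. U0 \<rho> t) has_real_derivative (\<rho> * cos t * U2 \<rho> t - \<rho> * sin t * U1 \<rho> t)) (at t within T)"
    if "0 \<le> \<rho>" "\<rho> \<le> R" for \<rho> t T
    using ang_real[OF datR[OF uC(1) XS[OF that]]] by (simp add: U0_def U1_def U2_def)
  have dU1t: "((\<lambda>t. U1 \<rho> t) has_real_derivative (\<rho> * cos t * U12 \<rho> t - \<rho> * sin t * U11 \<rho> t)) (at t within T)"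
    if "0 \<le> \<rho>" "\<rho> \<le> R" for \<rho> t T
    using ang_real[OF datR[OF uC(2) XS[OF that]]] by (simp add: U1_def U11_def U12_def)
  have dU2t: "((\<lambda>t. U2 \<rho> t) has_real_derivative (\<rho> * cos t * U22 \<rho> t - \<rho> * sin t * U12 \<rho> t)) (at t within T)"
    if "0 \<le> \<rho>" "\<rho> \<le> R" for \<rho> t T
    using ang_real[OF datR[OF uC(3) XS[OF that]]] clu[OF XS[OF that]] by (simp add: U2_def U12_def U22_def)
  have dVr: "((\<lambda>\<rho>. VV \<rho> t) has_real_derivative (cos t * VD1 \<rho> t + sin t * VD2 \<rho> t)) (at \<rho> within T)"
    if "0 \<le> \<rho>" "\<rho> \<le> R" for \<rho> t T
    using rad_real[OF datR[OF VC XS[OF that]]] by (simp add: VV_def VD1_def VD2_def)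
  have dPSr: "((\<lambda>\<rho>. PS L \<rho> t) has_real_derivative (cos t * PA L \<rho> t + sin t * PB L \<rho> t)) (at \<rho> within T)"
    if "bounded_linear L" "0 \<le> \<rho>" "\<rho> \<le> R" for L \<rho> t T
    using rad_lin[OF that(1) datP[OF PC(1) XS[OF that(2,3)]]] by (simp add: PS_def PA_def PB_def)
  have dPAr: "((\<lambda>\<rho>. PA L \<rho> t) has_real_derivative (cos t * PM L \<rho> t + sin t * PN L \<rho> t)) (at \<rho> within T)"
    if "bounded_linear L" "0 \<le> \<rho>" "\<rho> \<le> R" for L \<rho> t T
    using rad_lin[OF that(1) datP[OF PC(2) XS[OF that(2,3)]]] by (simp add: PA_def PM_def PN_def)
  have dPBr: "((\<lambda>\<rho>. PB L \<rho> t) has_real_derivative (cos t * PN L \<rho> t + sin t * PQ L \<rho> t)) (at \<rho> within T)"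
    if "bounded_linear L" "0 \<le> \<rho>" "\<rho> \<le> R" for L \<rho> t T
    using rad_lin[OF that(1) datP[OF PC(3) XS[OF that(2,3)]]] clP[OF XS[OF that(2,3)]]
    by (simp add: PB_def PN_def PQ_def)
  have dPSt: "((\<lambda>t. PS L \<rho> t) has_real_derivative (\<rho> * cos t * PB L \<rho> t - \<rho> * sin t * PA L \<rho> t)) (at t within T)"
    if "bounded_linear L" "0 \<le> \<rho>" "\<rho> \<le> R" for L \<rho> t T
    using ang_lin[OF that(1) datP[OF PC(1) XS[OF that(2,3)]]] by (simp add: PS_def PA_def PB_def)
  have dPAt: "((\<lambda>t. PA L \<rho> t) has_real_derivative (\<rho> * cos t * PN L \<rho> t - \<rho> * sin t * PM L \<rho> t)) (at t within T)"
    if "bounded_linear L" "0 \<le> \<rho>" "\<rho> \<le> R" for L \<rho> t T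
    using ang_lin[OF that(1) datP[OF PC(2) XS[OF that(2,3)]]] by (simp add: PA_def PM_def PN_def)
  have dPBt: "((\<lambda>t. PB L \<rho> t) has_real_derivative (\<rho> * cos t * PQ L \<rho> t - \<rho> * sin t * PN L \<rho> t)) (at t within T)"
    if "bounded_linear L" "0 \<le> \<rho>" "\<rho> \<le> R" for L \<rho> t T
    using ang_lin[OF that(1) datP[OF PC(3) XS[OF that(2,3)]]] clP[OF XS[OF that(2,3)]]
    by (simp add: PB_def PN_def PQ_def)
  define Nf where "Nf \<rho> t = cos t * U1 \<rho> t + sin t * U2 \<rho> t" for \<rho> t
  define Tf where "Tf \<rho> t = cos t * U2 \<rho> t - sin t * U1 \<rho> t" for \<rho> t
  define NR where "NR \<rho> t = cos t * (cos t * U11 \<rho> t + sin t * U12 \<rho> t) + sin t * (cos t * U12 \<rho> t + sin t * U22 \<rho> t)" for \<rho> t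
  define TR where "TR \<rho> t = cos t * (cos t * U12 \<rho> t + sin t * U22 \<rho> t) - sin t * (cos t * U11 \<rho> t + sin t * U12 \<rho> t)" for \<rho> t
  define NT where "NT \<rho> t = - sin t * U1 \<rho> t + cos t * (\<rho> * cos t * U12 \<rho> t - \<rho> * sin t * U11 \<rho> t)
      + (cos t * U2 \<rho> t + sin t * (\<rho> * cos t * U22 \<rho> t - \<rho> * sin t * U12 \<rho> t))" for \<rho> t
  define TT where "TT \<rho> t = - sin t * U2 \<rho> t + cos t * (\<rho> * cos t * U22 \<rho> t - \<rho> * sin t * U12 \<rho> t)
      - (cos t * U1 \<rho> t + sin t * (\<rho> * cos t * U12 \<rho> t - \<rho> * sin t * U11 \<rho> t))" for \<rho> t
  have dNr: "((\<lambda>\<rho>. Nf \<rho> t) has_real_derivative NR \<rho> t) (at \<rho> within T)" if "0 \<le> \<rho>" "\<rho> \<le> R" for \<rho> t T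
    unfolding Nf_def NR_def by (auto intro!: derivative_eq_intros dU1r[OF that] dU2r[OF that])
  have dTr: "((\<lambda>\<rho>. Tf \<rho> t) has_real_derivative TR \<rho> t) (at \<rho> within T)" if "0 \<le> \<rho>" "\<rho> \<le> R" for \<rho> t T
    unfolding Tf_def TR_def by (auto intro!: derivative_eq_intros dU1r[OF that] dU2r[OF that])
  have dNt: "((\<lambda>t. Nf \<rho> t) has_real_derivative NT \<rho> t) (at t within T)" if "0 \<le> \<rho>" "\<rho> \<le> R" for \<rho> t T
    unfolding Nf_def NT_def by (auto intro!: derivative_eq_intros dU1t[OF that] dU2t[OF that])
  have dTt: "((\<lambda>t. Tf \<rho> t) has_real_derivative TT \<rho> t) (at t within T)" if "0 \<le> \<rho>" "\<rho> \<le> R" for \<rho> t T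
    unfolding Tf_def TT_def by (auto intro!: derivative_eq_intros dU1t[OF that] dU2t[OF that])
  define Gu where "Gu \<rho> t = \<rho>^2 / 2 * ((Nf \<rho> t)^2 - (Tf \<rho> t)^2)" for \<rho> t
  define Gur where "Gur \<rho> t = \<rho> * ((Nf \<rho> t)^2 - (Tf \<rho> t)^2) + \<rho>^2 * (Nf \<rho> t * NR \<rho> t - Tf \<rho> t * TR \<rho> t)" for \<rho> t
  define Hu where "Hu \<rho> t = \<rho> * Nf \<rho> t * Tf \<rho> t" for \<rho> t
  define Hut where "Hut \<rho> t = \<rho> * (NT \<rho> t * Tf \<rho> t + Nf \<rho> t * TT \<rho> t)" for \<rho> t
  have dGu: "((\<lambda>\<rho>. Gu \<rho> t) has_real_derivative Gur \<rho> t) (at \<rho> within T)" if "0 \<le> \<rho>" "\<rho> \<le> R" for \<rho> t T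
    unfolding Gu_def Gur_def
    by (auto intro!: derivative_eq_intros dNr[OF that] dTr[OF that] simp: field_simps power2_eq_square)
  have dHu: "((\<lambda>t. Hu \<rho> t) has_real_derivative Hut \<rho> t) (at t within T)" if "0 \<le> \<rho>" "\<rho> \<le> R" for \<rho> t T
    unfolding Hu_def Hut_def
    by (auto intro!: derivative_eq_intros dNt[OF that] dTt[OF that] simp: algebra_simps)
  define VR where "VR \<rho> t = cos t * VD1 \<rho> t + sin t * VD2 \<rho> t" for \<rho> t
  define GV where "GV \<rho> t = \<rho>^2 * rpow \<rho> (2*\<alpha>) * (VV \<rho> t)^2 * exp (2 * U0 \<rho> t)" for \<rho> t
  define GVr where "GVr \<rho> t = 2 * \<rho> * rpow \<rho> (2*\<alpha>) * (VV \<rho> t)^2 * exp (2 * U0 \<rho> t)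
      + \<rho>^2 * (2 * \<alpha> * rpow \<rho> (2*\<alpha>) / \<rho>) * (VV \<rho> t)^2 * exp (2 * U0 \<rho> t)
      + \<rho>^2 * rpow \<rho> (2*\<alpha>) * (2 * VV \<rho> t * VR \<rho> t) * exp (2 * U0 \<rho> t)
      + \<rho>^2 * rpow \<rho> (2*\<alpha>) * (VV \<rho> t)^2 * (exp (2 * U0 \<rho> t) * (2 * Nf \<rho> t))" for \<rho> t
  have dGV: "((\<lambda>\<rho>. GV \<rho> t) has_real_derivative GVr \<rho> t) (at \<rho> within T)" if "0 < \<rho>" "\<rho> \<le> R" for \<rho> t T
  proof -
    have th: "0 \<le> \<rho>" "\<rho> \<le> R" using that by auto
    show ?thesis
      unfolding GV_def GVr_def
      apply (rule derivative_eq_intros dVr[OF th] dU0r[OF th] rpow_deriv[OF that(1)] refl)+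
      using that by (simp_all add: field_simps power2_eq_square VR_def Nf_def)
  qed
  define S2 where "S2 \<rho> t = (PS c1 \<rho> t)^2 + (PS c2 \<rho> t)^2 + (PS c3 \<rho> t)^2 + (PS c4 \<rho> t)^2" for \<rho> t
  define W0 where "W0 L \<rho> t = cos t * PA L \<rho> t + sin t * PB L \<rho> t" for L \<rho> t
  define W1 where "W1 L \<rho> t = - sin t * PA L \<rho> t + cos t * PB L \<rho> t" for L \<rho> t
  define S2R where "S2R \<rho> t = 2 * PS c1 \<rho> t * W0 c1 \<rho> t + 2 * PS c2 \<rho> t * W0 c2 \<rho> t
      + 2 * PS c3 \<rho> t * W0 c3 \<rho> t + 2 * PS c4 \<rho> t * W0 c4 \<rho> t" for \<rho> t
  have dS2: "((\<lambda>\<rho>. S2 \<rho> t) has_real_derivative S2R \<rho> t) (at \<rho> within T)" if "0 \<le> \<rho>" "\<rho> \<le> R" for \<rho> t T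
    unfolding S2_def S2R_def W0_def
    by (auto intro!: derivative_eq_intros dPSr[OF _ that] bl_c simp: algebra_simps power2_eq_square)
  define GW where "GW \<rho> t = - (\<rho>^2 * rpow \<rho> \<alpha> * VV \<rho> t * exp (U0 \<rho> t) * S2 \<rho> t)" for \<rho> t
  define GWr where "GWr \<rho> t = - (2 * \<rho> * rpow \<rho> \<alpha> * VV \<rho> t * exp (U0 \<rho> t) * S2 \<rho> t
      + \<rho>^2 * (\<alpha> * rpow \<rho> \<alpha> / \<rho>) * VV \<rho> t * exp (U0 \<rho> t) * S2 \<rho> t
      + \<rho>^2 * rpow \<rho> \<alpha> * VR \<rho> t * exp (U0 \<rho> t) * S2 \<rho> t
      + \<rho>^2 * rpow \<rho> \<alpha> * VV \<rho> t * (exp (U0 \<rho> t) * Nf \<rho> t) * S2 \<rho> t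
      + \<rho>^2 * rpow \<rho> \<alpha> * VV \<rho> t * exp (U0 \<rho> t) * S2R \<rho> t)" for \<rho> t
  have dGW: "((\<lambda>\<rho>. GW \<rho> t) has_real_derivative GWr \<rho> t) (at \<rho> within T)" if "0 < \<rho>" "\<rho> \<le> R" for \<rho> t T
  proof -
    have th: "0 \<le> \<rho>" "\<rho> \<le> R" using that by auto
    show ?thesis
      unfolding GW_def GWr_def
      apply (rule derivative_eq_intros dVr[OF th] dU0r[OF th] dS2[OF th] rpow_deriv[OF that(1)] refl)+
      using that by (simp_all add: field_simps power2_eq_square VR_def Nf_def)
  qed
  define W1R where "W1R L \<rho> t = - sin t * (cos t * PM L \<rho> t + sin t * PN L \<rho> t) + cos t * (cos t * PN L \<rho> t + sin t * PQ L \<rho> t)" for L \<rho> t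
  define W0T where "W0T L \<rho> t = - sin t * PA L \<rho> t + cos t * (\<rho> * cos t * PN L \<rho> t - \<rho> * sin t * PM L \<rho> t)
      + (cos t * PB L \<rho> t + sin t * (\<rho> * cos t * PQ L \<rho> t - \<rho> * sin t * PN L \<rho> t))" for L \<rho> t
  define PST where "PST L \<rho> t = \<rho> * cos t * PB L \<rho> t - \<rho> * sin t * PA L \<rho> t" for L \<rho> t
  have dW1r: "((\<lambda>\<rho>. W1 L \<rho> t) has_real_derivative W1R L \<rho> t) (at \<rho> within T)"
    if "bounded_linear L" "0 \<le> \<rho>" "\<rho> \<le> R" for L \<rho> t T
    unfolding W1_def W1R_def
    by (auto intro!: derivative_eq_intros dPAr[OF that] dPBr[OF that])
  have dW0t: "((\<lambda>t. W0 L \<rho> t) has_real_derivative W0T L \<rho> t) (at t within T)"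
    if "bounded_linear L" "0 \<le> \<rho>" "\<rho> \<le> R" for L \<rho> t T
    unfolding W0_def W0T_def
    by (auto intro!: derivative_eq_intros dPAt[OF that] dPBt[OF that])
  have dPSr': "((\<lambda>\<rho>. PS L \<rho> t) has_real_derivative W0 L \<rho> t) (at \<rho> within T)"
    if "bounded_linear L" "0 \<le> \<rho>" "\<rho> \<le> R" for L \<rho> t T
    using dPSr[OF that] by (simp add: W0_def)
  have dPSt': "((\<lambda>t. PS L \<rho> t) has_real_derivative PST L \<rho> t) (at t within T)"
    if "bounded_linear L" "0 \<le> \<rho>" "\<rho> \<le> R" for L \<rho> t T
    using dPSt[OF that] by (simp add: PST_def)
  define TF1 where "TF1 \<rho> t = tf (cos t) (sin t) (W1 c1 \<rho> t) (W1 c2 \<rho> t) (W1 c3 \<rho> t) (W1 c4 \<rho> t)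
      (PS c1 \<rho> t) (PS c2 \<rho> t) (PS c3 \<rho> t) (PS c4 \<rho> t)" for \<rho> t
  define TF1R where "TF1R \<rho> t = tf 0 0 (W1 c1 \<rho> t) (W1 c2 \<rho> t) (W1 c3 \<rho> t) (W1 c4 \<rho> t)
      (PS c1 \<rho> t) (PS c2 \<rho> t) (PS c3 \<rho> t) (PS c4 \<rho> t)
    + tf (cos t) (sin t) (W1R c1 \<rho> t) (W1R c2 \<rho> t) (W1R c3 \<rho> t) (W1R c4 \<rho> t)
      (PS c1 \<rho> t) (PS c2 \<rho> t) (PS c3 \<rho> t) (PS c4 \<rho> t)
    + tf (cos t) (sin t) (W1 c1 \<rho> t) (W1 c2 \<rho> t) (W1 c3 \<rho> t) (W1 c4 \<rho> t)
      (W0 c1 \<rho> t) (W0 c2 \<rho> t) (W0 c3 \<rho> t) (W0 c4 \<rho> t)" for \<rho> t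
  have dTF1: "((\<lambda>\<rho>. TF1 \<rho> t) has_real_derivative TF1R \<rho> t) (at \<rho> within T)" if "0 \<le> \<rho>" "\<rho> \<le> R" for \<rho> t T
    unfolding TF1_def TF1R_def
    by (rule tf_deriv DERIV_const dW1r[OF _ that] dPSr'[OF _ that] bl_c)+
  define TF0 where "TF0 \<rho> t = tf (cos t) (sin t) (W0 c1 \<rho> t) (W0 c2 \<rho> t) (W0 c3 \<rho> t) (W0 c4 \<rho> t)
      (PS c1 \<rho> t) (PS c2 \<rho> t) (PS c3 \<rho> t) (PS c4 \<rho> t)" for \<rho> t
  define TF0T where "TF0T \<rho> t = tf (- sin t) (cos t) (W0 c1 \<rho> t) (W0 c2 \<rho> t) (W0 c3 \<rho> t) (W0 c4 \<rho> t)
      (PS c1 \<rho> t) (PS c2 \<rho> t) (PS c3 \<rho> t) (PS c4 \<rho> t)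
    + tf (cos t) (sin t) (W0T c1 \<rho> t) (W0T c2 \<rho> t) (W0T c3 \<rho> t) (W0T c4 \<rho> t)
      (PS c1 \<rho> t) (PS c2 \<rho> t) (PS c3 \<rho> t) (PS c4 \<rho> t)
    + tf (cos t) (sin t) (W0 c1 \<rho> t) (W0 c2 \<rho> t) (W0 c3 \<rho> t) (W0 c4 \<rho> t)
      (PST c1 \<rho> t) (PST c2 \<rho> t) (PST c3 \<rho> t) (PST c4 \<rho> t)" for \<rho> t
  have dTF0: "((\<lambda>t. TF0 \<rho> t) has_real_derivative TF0T \<rho> t) (at t within T)" if "0 \<le> \<rho>" "\<rho> \<le> R" for \<rho> t T
    unfolding TF0_def TF0T_def
    by (rule tf_deriv has_field_derivative_at_within[OF DERIV_cos] has_field_derivative_at_within[OF DERIV_sin]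
        dW0t[OF _ that] dPSt'[OF _ that] bl_c)+
  define GS where "GS \<rho> t = - (\<rho>^2 * TF1 \<rho> t)" for \<rho> t
  define GSr where "GSr \<rho> t = - (2 * \<rho> * TF1 \<rho> t + \<rho>^2 * TF1R \<rho> t)" for \<rho> t
  define HS where "HS \<rho> t = \<rho> * TF0 \<rho> t" for \<rho> t
  define HSt where "HSt \<rho> t = \<rho> * TF0T \<rho> t" for \<rho> t
  have dGS: "((\<lambda>\<rho>. GS \<rho> t) has_real_derivative GSr \<rho> t) (at \<rho> within T)" if "0 \<le> \<rho>" "\<rho> \<le> R" for \<rho> t T
    unfolding GS_def GSr_def
    by (auto intro!: derivative_eq_intros dTF1[OF that] simp: power2_eq_square algebra_simps)
  have dHS: "((\<lambda>t. HS \<rho> t) has_real_derivative HSt \<rho> t) (at t within T)" if "0 \<le> \<rho>" "\<rho> \<le> R" for \<rho> t T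
    unfolding HS_def HSt_def
    by (auto intro!: derivative_eq_intros dTF0[OF that])
  have key: "Gur \<rho> t + Hut \<rho> t + GVr \<rho> t + GWr \<rho> t + GSr \<rho> t + HSt \<rho> t = \<rho> * \<Phi> (X \<rho> t)"
    if "0 < \<rho>" "\<rho> < R" for \<rho> t
  proof -
    have th: "0 \<le> \<rho>" "\<rho> \<le> R" using that by auto
    note x = XS[OF th, of t]
    have cs: "(cos t)^2 + (sin t)^2 = 1" by simp
    have i: "Gur \<rho> t + Hut \<rho> t = \<rho>^2 * Nf \<rho> t * (U11 \<rho> t + U22 \<rho> t)"
      unfolding Gur_def Hut_def NR_def TR_def NT_def TT_def Nf_def Tf_def using cs by algebra
    have lap: "U11 \<rho> t + U22 \<rho> t = - F (X \<rho> t)"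
      using bspec[OF eq_u x[unfolded S_def]] by (simp add: laplacian_def U11_def U22_def F_def algebra_simps)
    have nX: "norm (X \<rho> t) = \<rho>" using norm_X th by simp
    have S2n: "(norm (\<Psi> (X \<rho> t)))^2 = S2 \<rho> t" by (simp add: S2_def PS_def norm2_c)
    define h where "h = VV \<rho> t * rpow \<rho> \<alpha> * exp (U0 \<rho> t)"
    have Fx: "F (X \<rho> t) = 2 * (VV \<rho> t)^2 * rpow \<rho> (2*\<alpha>) * exp (2 * U0 \<rho> t) - h * S2 \<rho> t"
      by (simp add: F_def nX S2n VV_def U0_def h_def)
    have Wx: "W (X \<rho> t) = rpow \<rho> (2*\<alpha>) * exp (2 * U0 \<rho> t) * (2 * VV \<rho> t * (\<rho> * VR \<rho> t))
        - rpow \<rho> \<alpha> * exp (U0 \<rho> t) * S2 \<rho> t * (\<rho> * VR \<rho> t)"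
      using Weq[OF x] by (simp add: nX S2n VV_def U0_def VR_def VD1_def VD2_def Re_X Im_X algebra_simps)
    have eqP: "dirac \<Psi> (X \<rho> t) = - h *\<^sub>R \<Psi> (X \<rho> t)"
      using bspec[OF eq_Psi x[unfolded S_def]] by (simp add: h_def nX VV_def U0_def)
    note D = dirac_c[OF datP[OF PC(1) x] eqP]
    have D': "PA c3 \<rho> t - PB c4 \<rho> t = - h * PS c1 \<rho> t" "PA c4 \<rho> t + PB c3 \<rho> t = - h * PS c2 \<rho> t"
      "PA c1 \<rho> t + PB c2 \<rho> t = h * PS c3 \<rho> t" "PA c2 \<rho> t - PB c1 \<rho> t = h * PS c4 \<rho> t"
      using D by (simp_all add: PA_def PB_def PS_def)
    have iii: "GSr \<rho> t + HSt \<rho> t = \<rho> * h * S2 \<rho> t + \<rho>^2 * h * S2R \<rho> t"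
      unfolding GSr_def HSt_def TF1_def TF1R_def TF0T_def W1R_def W0T_def PST_def W0_def W1_def S2_def S2R_def tf_def
      using cs D' by algebra
    have r1: "\<rho>^2 * (2 * \<alpha> * rpow \<rho> (2*\<alpha>) / \<rho>) = 2 * \<alpha> * \<rho> * rpow \<rho> (2*\<alpha>)"
      using that by (simp add: power2_eq_square)
    have r2: "\<rho>^2 * (\<alpha> * rpow \<rho> \<alpha> / \<rho>) = \<alpha> * \<rho> * rpow \<rho> \<alpha>"
      using that by (simp add: power2_eq_square)
    have "Gur \<rho> t + Hut \<rho> t = - (\<rho>^2 * Nf \<rho> t * F (X \<rho> t))" using i lap by simp
    then show ?thesis
      unfolding GVr_def GWr_def \<Phi>_def Wx Fx
      using iii r1 r2 h_def by algebra
  qed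
  define A where "A = {0..R} \<times> {0..2*pi}"
  define B where "B = {0<..<R} \<times> {0..2*pi}"
  have BA: "B \<subseteq> A" by (auto simp: A_def B_def)
  have cQ: "continuous_on Q (\<lambda>p. \<phi> (X (fst p) (snd p)))"
    if "continuous_on S \<phi>" "Q \<subseteq> A" for Q and \<phi> :: "complex \<Rightarrow> real"
    by (rule cont_polar[OF that(1)]) (use that(2) XSp in \<open>auto simp: A_def\<close>)
  have cQL: "continuous_on Q (\<lambda>p. L (\<phi> (X (fst p) (snd p))))"
    if "bounded_linear L" "continuous_on S \<phi>" "Q \<subseteq> A" for Q L and \<phi> :: "complex \<Rightarrow> complex \<times> complex"
    by (rule cont_polarL[OF that(1,2)]) (use that(3) XSp in \<open>auto simp: A_def\<close>)
  have crp: "continuous_on Q (\<lambda>p. rpow (fst p) a)" if "0 \<le> a" "Q \<subseteq> A" for Q a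
    by (rule cont_rpow_fst[OF that(1)]) (use that(2) in \<open>auto simp: A_def\<close>)
  note base = cQ[OF contR(1)[OF uC(1)]] cQ[OF contR(1)[OF uC(2)]] cQ[OF contR(1)[OF uC(3)]]
    cQ[OF contR(1)[OF VC]] cQL[OF _ contP(1)[OF PC(1)]] cQL[OF _ contP(1)[OF PC(2)]] cQL[OF _ contP(1)[OF PC(3)]]
    crp
  note base2 = cQ[OF contR(2)[OF uC(2)]] cQ[OF contR(3)[OF uC(2)]] cQ[OF contR(3)[OF uC(3)]]
    cQ[OF contR(2)[OF VC]] cQ[OF contR(3)[OF VC]]
    cQL[OF _ contP(2)[OF PC(2)]] cQL[OF _ contP(3)[OF PC(2)]] cQL[OF _ contP(3)[OF PC(3)]]
  have aQ: "continuous_on Q (\<lambda>p. U0 (fst p) (snd p))" "continuous_on Q (\<lambda>p. U1 (fst p) (snd p))"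
    "continuous_on Q (\<lambda>p. U2 (fst p) (snd p))" "continuous_on Q (\<lambda>p. VV (fst p) (snd p))"
    "continuous_on Q (\<lambda>p. PS L (fst p) (snd p))" "continuous_on Q (\<lambda>p. PA L (fst p) (snd p))"
    "continuous_on Q (\<lambda>p. PB L (fst p) (snd p))"
    if "Q \<subseteq> A" "bounded_linear L" for Q L
    unfolding U0_def U1_def U2_def VV_def PS_def PA_def PB_def using base that by auto
  have aQ2: "continuous_on Q (\<lambda>p. U11 (fst p) (snd p))" "continuous_on Q (\<lambda>p. U12 (fst p) (snd p))"
    "continuous_on Q (\<lambda>p. U22 (fst p) (snd p))" "continuous_on Q (\<lambda>p. VD1 (fst p) (snd p))"
    "continuous_on Q (\<lambda>p. VD2 (fst p) (snd p))" "continuous_on Q (\<lambda>p. PM L (fst p) (snd p))"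
    "continuous_on Q (\<lambda>p. PN L (fst p) (snd p))" "continuous_on Q (\<lambda>p. PQ L (fst p) (snd p))"
    if "Q \<subseteq> A" "bounded_linear L" for Q L
    unfolding U11_def U12_def U22_def VD1_def VD2_def PM_def PN_def PQ_def using base2 that by auto
  note atA = aQ[OF order_refl bl_c(1)] aQ[OF order_refl bl_c(2)] aQ[OF order_refl bl_c(3)] aQ[OF order_refl bl_c(4)]
  note atB = aQ[OF BA bl_c(1)] aQ[OF BA bl_c(2)] aQ[OF BA bl_c(3)] aQ[OF BA bl_c(4)]
    aQ2[OF BA bl_c(1)] aQ2[OF BA bl_c(2)] aQ2[OF BA bl_c(3)] aQ2[OF BA bl_c(4)]
  define G where "G \<rho> t = Gu \<rho> t + GV \<rho> t + GW \<rho> t + GS \<rho> t" for \<rho> t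
  have crA: "continuous_on A (\<lambda>p. rpow (fst p) \<alpha>)" "continuous_on A (\<lambda>p. rpow (fst p) (2*\<alpha>))"
    using crp[OF a0(1) order_refl] crp[OF a0(2) order_refl] .
  have cGu: "continuous_on A (\<lambda>p. Gu (fst p) (snd p))"
    unfolding Gu_def Nf_def Tf_def
    by (intro continuous_intros atA) auto
  have cGV: "continuous_on A (\<lambda>p. GV (fst p) (snd p))"
    unfolding GV_def
    by (intro continuous_intros atA crA)
  have cGW: "continuous_on A (\<lambda>p. GW (fst p) (snd p))"
    unfolding GW_def S2_def
    by (intro continuous_intros atA crA)
  have cGS: "continuous_on A (\<lambda>p. GS (fst p) (snd p))"
    unfolding GS_def TF1_def W1_def tf_def
    by (intro continuous_intros atA)
  have crB: "continuous_on B (\<lambda>p. rpow (fst p) \<alpha>)" "continuous_on B (\<lambda>p. rpow (fst p) (2*\<alpha>))"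
    using crp[OF a0(1) BA] crp[OF a0(2) BA] .
  have Bnz: "\<forall>p\<in>B. fst p \<noteq> 0" by (auto simp: B_def)
  have cGur: "continuous_on B (\<lambda>p. Gur (fst p) (snd p))"
    unfolding Gur_def Nf_def Tf_def NR_def TR_def
    by (intro continuous_intros atB)
  have cGVr: "continuous_on B (\<lambda>p. GVr (fst p) (snd p))"
    unfolding GVr_def VR_def Nf_def
    by (intro continuous_intros atB crB) (use Bnz in auto)
  have cGWr: "continuous_on B (\<lambda>p. GWr (fst p) (snd p))"
    unfolding GWr_def VR_def Nf_def S2_def S2R_def W0_def
    by (intro continuous_intros atB crB) (use Bnz in auto)
  have cGSr: "continuous_on B (\<lambda>p. GSr (fst p) (snd p))"
    unfolding GSr_def TF1_def TF1R_def W1_def W1R_def W0_def tf_def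
    by (intro continuous_intros atB)
  have cK: "continuous_on A (\<lambda>p. fst p * \<Phi> (X (fst p) (snd p)))"
  proof -
    have "continuous_on A (\<lambda>p. \<Phi> (X (fst p) (snd p)))"
    proof (rule cont_polar[OF cPhi])
      fix p assume "p \<in> A"
      then have "0 \<le> fst p" "fst p \<le> R" by (auto simp: A_def mem_Times_iff)
      then show "X (fst p) (snd p) \<in> cball 0 R" by (rule Xcb)
    qed
    then show ?thesis by (intro continuous_intros)
  qed
  define G where "G \<rho> t = Gu \<rho> t + GV \<rho> t + GW \<rho> t + GS \<rho> t" for \<rho> t
  define Gr where "Gr \<rho> t = Gur \<rho> t + GVr \<rho> t + GWr \<rho> t + GSr \<rho> t" for \<rho> t
  define H where "H \<rho> t = Hu \<rho> t + HS \<rho> t" for \<rho> t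
  define Ht where "Ht \<rho> t = Hut \<rho> t + HSt \<rho> t" for \<rho> t
  define K where "K \<rho> t = \<rho> * \<Phi> (X \<rho> t)" for \<rho> t
  have X2pi: "X \<rho> (2*pi) = X \<rho> 0" for \<rho> by (simp add: X_def)
  have FT: "integral {0..R} (\<lambda>\<rho>. integral {0..2*pi} (K \<rho>)) = integral {0..2*pi} (G R)"
  proof (rule ftc_polar[where Gr=Gr and H=H and Ht=Ht])
    show "0 < R" by (rule R0)
    show "continuous_on ({0..R} \<times> {0..2*pi}) (\<lambda>(r,t). G r t)"
      unfolding case_prod_beta' G_def A_def[symmetric] by (intro continuous_intros cGu cGV cGW cGS)
    show "G 0 t = 0" for t by (simp add: G_def Gu_def GV_def GW_def GS_def)
    show "((\<lambda>r. G r t) has_real_derivative Gr r t) (at r)" if "r \<in> {0<..<R}" "t \<in> {0..2*pi}" for r t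
    proof -
      have r: "0 < r" "r \<le> R" "0 \<le> r" using that by auto
      show ?thesis unfolding G_def Gr_def
        by (intro DERIV_add dGu[OF r(3,2)] dGV[OF r(1,2)] dGW[OF r(1,2)] dGS[OF r(3,2)])
    qed
    show "continuous_on ({0<..<R} \<times> {0..2*pi}) (\<lambda>(r,t). Gr r t)"
      unfolding case_prod_beta' Gr_def B_def[symmetric] by (intro continuous_intros cGur cGVr cGWr cGSr)
    show "((\<lambda>t. H r t) has_real_derivative Ht r t) (at t within {0..2*pi})" if "r \<in> {0<..<R}" "t \<in> {0..2*pi}" for r t
    proof -
      have r: "0 \<le> r" "r \<le> R" using that by auto
      show ?thesis unfolding H_def Ht_def by (intro DERIV_add dHu[OF r] dHS[OF r])
    qed
    show "H r 0 = H r (2*pi)" for r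
      by (simp add: H_def Hu_def HS_def Nf_def Tf_def TF0_def W0_def U1_def U2_def PS_def PA_def PB_def X2pi)
    show "Gr r t + Ht r t = K r t" if "r \<in> {0<..<R}" "t \<in> {0..2*pi}" for r t
      using key[of r t] that by (simp add: Gr_def Ht_def K_def algebra_simps)
    show "continuous_on ({0..R} \<times> {0..2*pi}) (\<lambda>(r,t). K r t)"
      unfolding case_prod_beta' K_def A_def[symmetric] by (rule cK)
  qed
  have main1: "(1 + \<alpha>) * integral (ball 0 R) F + integral (ball 0 R) W = integral {0..2*pi} (G R)"
    using IPhi Ppolar FT by (simp add: K_def[abs_def])
  define Lint where "Lint x = (normal_deriv u x)\<^sup>2 - 1/2 * (norm (grad u x))\<^sup>2" for x
  define Vint where "Vint x = (V x)\<^sup>2 * rpow (norm x) (2*\<alpha>) * exp (2 * u x)" for x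
  define Sre where "Sre x = inner (normal_deriv \<Psi> x) (clifford x (\<Psi> x))" for x
  have RS: "0 \<le> R" "R \<le> R" using R0 by auto
  have pL: "R * (R * Lint (X R t)) = Gu R t" for t
  proof -
    note x = XS[OF RS, of t]
    have nd: "normal_deriv u (X R t) = Nf R t"
      using normal_deriv_X[OF R0 datR[OF uC(1) x]] by (simp add: Nf_def U1_def U2_def)
    have ng: "(norm (grad u (X R t)))\<^sup>2 = (Nf R t)^2 + (Tf R t)^2"
    proof -
      have cs: "(cos t)^2 + (sin t)^2 = 1" by simp
      have "(Nf R t)^2 + (Tf R t)^2 = (U1 R t)^2 + (U2 R t)^2"
        unfolding Nf_def Tf_def using cs by algebra
      then show ?thesis by (simp add: norm_grad2 U1_def U2_def)
    qed
    show ?thesis unfolding Lint_def nd ng Gu_def by (simp add: power2_eq_square field_simps)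
  qed
  have pV: "R * (R * Vint (X R t)) = GV R t" for t
    using norm_X[OF RS(1), of t] by (simp add: Vint_def GV_def VV_def U0_def power2_eq_square algebra_simps)
  have pS: "R * Sre (X R t) = - (GW R t + GS R t)" for t
  proof -
    note x = XS[OF RS, of t]
    have nX: "norm (X R t) = R" using norm_X RS by simp
    define h where "h = VV R t * rpow R \<alpha> * exp (U0 R t)"
    have eqP: "dirac \<Psi> (X R t) = - h *\<^sub>R \<Psi> (X R t)"
      using bspec[OF eq_Psi x[unfolded S_def]] by (simp add: h_def nX VV_def U0_def)
    note D = dirac_c[OF datP[OF PC(1) x] eqP]
    have nd: "normal_deriv \<Psi> (X R t) = cos t *\<^sub>R d1 \<Psi> (X R t) + sin t *\<^sub>R d2 \<Psi> (X R t)"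
      using normal_deriv_X[OF R0 datP[OF PC(1) x]] .
    have cl: "clifford (X R t) (\<Psi> (X R t)) = R *\<^sub>R clifford (Complex (cos t) (sin t)) (\<Psi> (X R t))"
      by (simp add: X_def clifford_scale cis_Complex)
    have ab: "h * (norm (\<Psi> (X R t)))^2 + TF1 R t
        = inner (cos t *\<^sub>R d1 \<Psi> (X R t) + sin t *\<^sub>R d2 \<Psi> (X R t)) (clifford (Complex (cos t) (sin t)) (\<Psi> (X R t)))"
      using alg_bd[OF _ D, of "cos t" "sin t"] by (simp add: TF1_def W1_def PA_def PB_def PS_def)
    have S2n: "(norm (\<Psi> (X R t)))^2 = S2 R t" by (simp add: S2_def PS_def norm2_c)
    show ?thesis
      unfolding Sre_def nd cl inner_scaleR_right ab[symmetric] S2n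
      by (simp add: GW_def GS_def h_def power2_eq_square algebra_simps)
  qed
  have ctR: "continuous_on {0..2*pi} (\<lambda>t. f (fst (R, t)) (snd (R, t)))"
    if "continuous_on A (\<lambda>p. f (fst p) (snd p))" for f :: "real \<Rightarrow> real \<Rightarrow> real"
    by (rule continuous_on_compose2[OF that, of _ "\<lambda>t. (R, t)"]) (use R0 in \<open>auto simp: A_def intro: continuous_intros\<close>)
  have iGu: "(\<lambda>t. Gu R t) integrable_on {0..2*pi}" using ctR[OF cGu] by (simp add: integrable_continuous_real)
  have iGV: "(\<lambda>t. GV R t) integrable_on {0..2*pi}" using ctR[OF cGV] by (simp add: integrable_continuous_real)
  have iGW: "(\<lambda>t. GW R t) integrable_on {0..2*pi}" using ctR[OF cGW] by (simp add: integrable_continuous_real)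
  have iGS: "(\<lambda>t. GS R t) integrable_on {0..2*pi}" using ctR[OF cGS] by (simp add: integrable_continuous_real)
  have iGWS: "(\<lambda>t. GW R t + GS R t) integrable_on {0..2*pi}" using iGW iGS by (rule integrable_add)
  have intG: "integral {0..2*pi} (G R) = integral {0..2*pi} (\<lambda>t. Gu R t) + integral {0..2*pi} (\<lambda>t. GV R t)
      + integral {0..2*pi} (\<lambda>t. GW R t + GS R t)"
  proof -
    have "G R = (\<lambda>t. (Gu R t + GV R t) + (GW R t + GS R t))" by (simp add: G_def[abs_def] algebra_simps)
    then show ?thesis
      by (simp add: integral_add iGu iGV iGWS integrable_add)
  qed
  have intL: "integral {0..2*pi} (\<lambda>t. Gu R t) = R * circle_integral R Lint"
    unfolding circle_integral_X pL[symmetric] by (simp add: integral_mult_right)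
  have intV: "integral {0..2*pi} (\<lambda>t. GV R t) = R * circle_integral R Vint"
    unfolding circle_integral_X pV[symmetric] by (simp add: integral_mult_right)
  have intS: "integral {0..2*pi} (\<lambda>t. GW R t + GS R t) = - integral {0..2*pi} (\<lambda>t. R * Sre (X R t))"
  proof -
    have "integral {0..2*pi} (\<lambda>t. GW R t + GS R t) = integral {0..2*pi} (\<lambda>t. - (R * Sre (X R t)))"
      by (rule integral_cong) (simp add: pS)
    then show ?thesis by (simp add: integral_neg)
  qed
  have iSre: "(\<lambda>t. 2 * (R * Sre (X R t))) integrable_on {0..2*pi}"
  proof -
    have "(\<lambda>t. (-2) * (GW R t + GS R t)) integrable_on {0..2*pi}"
      using integrable_on_cmult_left[OF iGWS, of "-2"] by simp
    moreover have "(\<lambda>t. (-2) * (GW R t + GS R t)) = (\<lambda>t. 2 * (R * Sre (X R t)))"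
      by (rule ext) (simp add: pS)
    ultimately show ?thesis by simp
  qed
  have intC: "1/2 * circle_integral R (\<lambda>x. herm (normal_deriv \<Psi> x) (clifford x (\<Psi> x)) + herm (clifford x (\<Psi> x)) (normal_deriv \<Psi> x))
      = complex_of_real (integral {0..2*pi} (\<lambda>t. R * Sre (X R t)))"
  proof -
    have "circle_integral R (\<lambda>x. herm (normal_deriv \<Psi> x) (clifford x (\<Psi> x)) + herm (clifford x (\<Psi> x)) (normal_deriv \<Psi> x))
        = integral {0..2*pi} (complex_of_real \<circ> (\<lambda>t. 2 * (R * Sre (X R t))))"
      unfolding circle_integral_X herm_sum Sre_def by (simp add: o_def scaleR_conv_of_real)
    also have "\<dots> = complex_of_real (integral {0..2*pi} (\<lambda>t. 2 * (R * Sre (X R t))))"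
      by (rule integral_linear[OF iSre bounded_linear_of_real])
    also have "\<dots> = complex_of_real (2 * integral {0..2*pi} (\<lambda>t. R * Sre (X R t)))"
      by (simp add: integral_mult_right)
    finally show ?thesis by simp
  qed
  have eL: "(\<lambda>x. (normal_deriv u x)\<^sup>2 - 1/2 * (norm (grad u x))\<^sup>2) = Lint" by (simp add: Lint_def[abs_def])
  have eV: "(\<lambda>x. (V x)\<^sup>2 * rpow (norm x) (2*\<alpha>) * exp (2 * u x)) = Vint" by (simp add: Vint_def[abs_def])
  have eF: "(\<lambda>x. 2 * (V x)\<^sup>2 * rpow (norm x) (2*\<alpha>) * exp (2 * u x)
                 - V x * rpow (norm x) \<alpha> * exp (u x) * (norm (\<Psi> x))\<^sup>2) = F" by (simp add: F_def[abs_def])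
  have eW: "(\<lambda>x. rpow (norm x) (2*\<alpha>) * exp (2 * u x) * (x \<bullet> grad (\<lambda>y. (V y)\<^sup>2) x)
                 - rpow (norm x) \<alpha> * exp (u x) * (norm (\<Psi> x))\<^sup>2 * (x \<bullet> grad V x)) = W" by (simp add: W_def[abs_def])
  have real_eq: "R * circle_integral R Lint = (1 + \<alpha>) * integral (ball 0 R) F - R * circle_integral R Vint
      + integral {0..2*pi} (\<lambda>t. R * Sre (X R t)) + integral (ball 0 R) W"
    using main1 intG intL intV intS by simp
  show ?thesis
    unfolding eL eV eF eW intC
    using arg_cong[OF real_eq, of complex_of_real] by simp
qed

end
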